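(* Let $((G_n)_{n\in\mathbb{N}},(\rho_n)_{n\in\mathbb{N}},(\kappa_k^n)_{k\le n})$ be a diverse $d$-ary cloning system. Then every non-trivial element of $\mathscr{T}_d(G_* )$ has infinitely many $F_d$-conjugates, i.e. for every $x\in\mathscr{T}_d(G_* )\setminus\{1\}$ the set $\{f^{-1}xf: f\in F_d\}$ is infinite. In particular $\mathscr{T}_d(G_* )$ is ICC, and (equivalently to the first statement) the inclusion of group von Neumann algebras $L(F_d)\subseteq L(\mathscr{T}_d(G_* ))$ is irreducible, i.e. $L(F_d)'\cap L(\mathscr{T}_d(G_* ))=\mathbb{C}1$.
   Context: Fix an integer $d\ge 2$. A $d$-ary tree is a finite rooted tree in which each non-leaf vertex has exactly $d$ ordered children; its leaves are numbered $1,\dots,n$ from left to right, and $n(T)$ is the number of leaves of $T$. For $1\le k\le n(T)$, $T_k$ denotes the tree obtained from $T$ by attaching a $d$-ary caret (a root with $d$ leaf children) to the $k$-th leaf. Standard cloning maps on symmetric groups: for $\sigma\in S_n$ and $1\le k\le n$, partition $\{1,\dots,n+d-1\}$ into consecutive blocks $B^{(k)}_1,\dots,B^{(k)}_n$ with $B^{(k)}_j=\{j\}$ for $j<k$, $B^{(k)}_k=\{k,\dots,k+d-1\}$, $B^{(k)}_j=\{j+d-1\}$ for $j>k$; then $(\sigma)\varsigma_k^n\in S_{n+d-1}$ maps each $B^{(k)}_j$ onto $B^{(\sigma(k))}_{\sigma(j)}$ preserving order. A $d$-ary cloning system consists of groups $(G_n)_{n\in\mathbb{N}}$, homomorphisms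 $\rho_n:G_n\to S_n$, and injective functions (not necessarily homomorphisms) $\kappa_k^n:G_n\to G_{n+d-1}$, $1\le k\le n$, written on the right ($g\mapsto (g)\kappa_k^n$, with $(g)(\kappa\circ\kappa'):=((g)\kappa)\kappa'$), such that for all $1\le k<\ell\le n$ and $g,h\in G_n$: (C1) $(gh)\kappa_k^n=(g)\kappa^n_{\rho_n(h)k}\,(h)\kappa_k^n$; (C2) $\kappa_\ell^n\circ\kappa_k^{n+d-1}=\kappa_k^n\circ\kappa_{\ell+d-1}^{n+d-1}$; (C3) $\rho_{n+d-1}((g)\kappa_k^n)(i)=((\rho_n(g))\varsigma_k^n)(i)$ for all $i\notin\{k,\dots,k+d-1\}$. The group $\mathscr{T}_d(G_* )$ consists of equivalence classes $[T,g,U]$ of triples $(T,g,U)$, where $T,U$ are $d$-ary trees with the same number $n$ of leaves and $g\in G_n$, under the equivalence relation generated by $(T,g,U)\sim(T_{\rho_n(g)(k)},(g)\kappa_k^n,U_k)$ ($1\le k\le n$); multiplication is $[T,g,U][U,h,W]=[T,gh,W]$ (any two elements can be represented with equal middle trees). The elements $[T,1,U]$ form a subgroup isomorphic to the Higman–Thompson group $F_d$; this is the copy of $F_d$ in $\mathscr{T}_d(G_* )$. The system is diverse if there is $n_0\in\mathbb{N}$ with $\bigcap_{k=1}^n \mathrm{Im}\,\kappa_k^n=\{1\}$ for all $n\ge n_0$. $L(G)$ denotes the group von Neumann algebra of a countable discrete group $G$. *)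

theory Defs
  imports "HOL-Algebra.Sym_Groups"
begin

datatype dtree = Leaf | Node "dtree list"

fun leaves :: "dtree \<Rightarrow> nat" where
  "leaves Leaf = 1"
| "leaves (Node ts) = sum_list (map leaves ts)"

fun dvalid :: "nat \<Rightarrow> dtree \<Rightarrow> bool" where
  "dvalid d Leaf = True"
| "dvalid d (Node ts) = (length ts = d \<and> (\<forall>t\<in>set ts. dvalid d t))"

text \<open>grow d k T is T_k: attach a d-ary caret to the k-th leaf (leaves numbered from 1).\<close>
fun grow :: "nat \<Rightarrow> nat \<Rightarrow> dtree \<Rightarrow> dtree"
and growl :: "nat \<Rightarrow> nat \<Rightarrow> dtree list \<Rightarrow> dtree list" where
  "grow d k Leaf = (if k = 1 then Node (replicate d Leaf) else Leaf)"
| "grow d k (Node ts) = Node (growl d k ts)"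
| "growl d k [] = []"
| "growl d k (t # ts) =
     (if k \<le> leaves t then grow d k t # ts else t # growl d (k - leaves t) ts)"

text \<open>Blocks B^(k)_j of {1..n+d-1}: first element and the block containing i.\<close>
definition blk_start :: "nat \<Rightarrow> nat \<Rightarrow> nat \<Rightarrow> nat" where
  "blk_start d k j = (if j \<le> k then j else j + d - 1)"

definition blk_of :: "nat \<Rightarrow> nat \<Rightarrow> nat \<Rightarrow> nat" where
  "blk_of d k i = (if i < k then i else if i < k + d then k else i - (d - 1))"

definition sclone :: "nat \<Rightarrow> nat \<Rightarrow> nat \<Rightarrow> (nat \<Rightarrow> nat) \<Rightarrow> nat \<Rightarrow> nat" where
  "sclone d n k \<sigma> i =
     (if 1 \<le> i \<and> i \<le> n + d - 1
      then blk_start d (\<sigma> k) (\<sigma> (blk_of d k i)) + (i - blk_start d k (blk_of d k i))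
      else i)"

text \<open>G n is the group G_n, rho n the homomorphism G_n -> S_n, and kappa n k g = (g)kappa_k^n.\<close>
definition cloning_system ::
  "nat \<Rightarrow> (nat \<Rightarrow> 'g monoid) \<Rightarrow> (nat \<Rightarrow> 'g \<Rightarrow> nat \<Rightarrow> nat) \<Rightarrow> (nat \<Rightarrow> nat \<Rightarrow> 'g \<Rightarrow> 'g) \<Rightarrow> bool"
where
  "cloning_system d G \<rho> \<kappa> \<longleftrightarrow>
     2 \<le> d \<and>
     (\<forall>n\<ge>1. group (G n)) \<and>
     (\<forall>n\<ge>1. \<rho> n \<in> hom (G n) (sym_group n)) \<and>
     (\<forall>n\<ge>1. \<forall>k\<in>{1..n}. \<kappa> n k \<in> carrier (G n) \<rightarrow> carrier (G (n + d - 1))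
                        \<and> inj_on (\<kappa> n k) (carrier (G n))) \<and>
     (\<forall>n\<ge>1. \<forall>k\<in>{1..n}. \<forall>g\<in>carrier (G n). \<forall>h\<in>carrier (G n).
        \<kappa> n k (g \<otimes>\<^bsub>G n\<^esub> h) = \<kappa> n (\<rho> n h k) g \<otimes>\<^bsub>G (n + d - 1)\<^esub> \<kappa> n k h) \<and>
     (\<forall>n\<ge>1. \<forall>k l g. 1 \<le> k \<and> k < l \<and> l \<le> n \<and> g \<in> carrier (G n) \<longrightarrow>
        \<kappa> (n + d - 1) k (\<kappa> n l g) = \<kappa> (n + d - 1) (l + d - 1) (\<kappa> n k g)) \<and>
     (\<forall>n\<ge>1. \<forall>k\<in>{1..n}. \<forall>g\<in>carrier (G n). \<forall>i. i \<notin> {k..k + d - 1} \<longrightarrow>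
        \<rho> (n + d - 1) (\<kappa> n k g) i = sclone d n k (\<rho> n g) i)"

definition diverse ::
  "nat \<Rightarrow> (nat \<Rightarrow> 'g monoid) \<Rightarrow> (nat \<Rightarrow> nat \<Rightarrow> 'g \<Rightarrow> 'g) \<Rightarrow> bool"
where
  "diverse d G \<kappa> \<longleftrightarrow>
     (\<exists>n0. \<forall>n\<ge>max n0 1. (\<Inter>k\<in>{1..n}. \<kappa> n k ` carrier (G n)) = {\<one>\<^bsub>G (n + d - 1)\<^esub>})"

definition valid_triple :: "nat \<Rightarrow> (nat \<Rightarrow> 'g monoid) \<Rightarrow> dtree \<times> 'g \<times> dtree \<Rightarrow> bool" where
  "valid_triple d G x \<longleftrightarrow> (case x of (T, g, U) \<Rightarrow>
     dvalid d T \<and> dvalid d U \<and> leaves T = leaves U \<and> g \<in> carrier (G (leaves T)))"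

definition expand_rel ::
  "nat \<Rightarrow> (nat \<Rightarrow> 'g monoid) \<Rightarrow> (nat \<Rightarrow> 'g \<Rightarrow> nat \<Rightarrow> nat) \<Rightarrow> (nat \<Rightarrow> nat \<Rightarrow> 'g \<Rightarrow> 'g)
   \<Rightarrow> ((dtree \<times> 'g \<times> dtree) \<times> (dtree \<times> 'g \<times> dtree)) set"
where
  "expand_rel d G \<rho> \<kappa> =
     {((T, g, U), (grow d (\<rho> (leaves T) g k) T, \<kappa> (leaves T) k g, grow d k U)) | T g U k.
        valid_triple d G (T, g, U) \<and> 1 \<le> k \<and> k \<le> leaves T}"

definition triple_equiv where
  "triple_equiv d G \<rho> \<kappa> = (expand_rel d G \<rho> \<kappa> \<union> (expand_rel d G \<rho> \<kappa>)\<inverse>)\<^sup>*"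

definition tclass where
  "tclass d G \<rho> \<kappa> x = triple_equiv d G \<rho> \<kappa> `` {x}"

definition tmult where
  "tmult d G \<rho> \<kappa> X Y =
     (let (T, g, U, h, W) = (SOME (T, g, U, h, W).
           valid_triple d G (T, g, U) \<and> valid_triple d G (U, h, W) \<and>
           X = tclass d G \<rho> \<kappa> (T, g, U) \<and> Y = tclass d G \<rho> \<kappa> (U, h, W))
      in tclass d G \<rho> \<kappa> (T, g \<otimes>\<^bsub>G (leaves T)\<^esub> h, W))"

definition TG ::
  "nat \<Rightarrow> (nat \<Rightarrow> 'g monoid) \<Rightarrow> (nat \<Rightarrow> 'g \<Rightarrow> nat \<Rightarrow> nat) \<Rightarrow> (nat \<Rightarrow> nat \<Rightarrow> 'g \<Rightarrow> 'g)
   \<Rightarrow> (dtree \<times> 'g \<times> dtree) set monoid"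
where
  "TG d G \<rho> \<kappa> =
    \<lparr> carrier = {tclass d G \<rho> \<kappa> x | x. valid_triple d G x},
      mult = tmult d G \<rho> \<kappa>,
      one = tclass d G \<rho> \<kappa> (Leaf, \<one>\<^bsub>G 1\<^esub>, Leaf) \<rparr>"

definition Fd_copy where
  "Fd_copy d G \<rho> \<kappa> =
     {tclass d G \<rho> \<kappa> (T, \<one>\<^bsub>G (leaves T)\<^esub>, U) | T U.
        dvalid d T \<and> dvalid d U \<and> leaves T = leaves U}"

end

theory Submission
  imports Defs
begin


fun addrs :: "dtree \<Rightarrow> nat list list" and addrsl :: "nat \<Rightarrow> dtree list \<Rightarrow> nat list list" where
  "addrs Leaf = [[]]"
| "addrs (Node ts) = addrsl 0 ts"
| "addrsl i [] = []"
| "addrsl i (t # ts) = map (Cons i) (addrs t) @ addrsl (Suc i) ts"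

lemma len_addrsl: "length (addrsl i ts) = sum_list (map leaves ts)"
  and len_addrs: "length (addrs t) = leaves t"
proof -
  have "\<forall>i. length (addrsl i ts) = sum_list (map leaves ts)" if "\<forall>t\<in>set ts. length (addrs t) = leaves t" for ts
    using that by (induction ts) auto
  moreover have "length (addrs t) = leaves t" for t
    by (induction t) (use calculation in auto)
  ultimately show "length (addrsl i ts) = sum_list (map leaves ts)" "length (addrs t) = leaves t" by auto
qed

lemma leaves_pos: "d \<ge> 1 \<Longrightarrow> dvalid d t \<Longrightarrow> leaves t \<ge> 1"
proof (induction t)
  case Leaf then show ?case by simp
next
  case (Node ts)
  then obtain t where "t \<in> set ts" by (cases ts) auto
  with Node have "leaves t \<ge> 1" by auto
  moreover have "leaves t \<le> sum_list (map leaves ts)"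
    using \<open>t \<in> set ts\<close> by (simp add: member_le_sum_list)
  ultimately show ?case by simp
qed

lemma addrsl_rep: "addrsl i (replicate m Leaf) = map (\<lambda>j. [j]) [i..<i+m]"
  by (induction m arbitrary: i) (auto simp: upt_rec)

definition blockl :: "nat \<Rightarrow> nat list \<Rightarrow> nat list list" where
  "blockl d a = map (\<lambda>j. a @ [j]) [0..<d]"

lemma grow_props:
  assumes "dvalid d T" "1 \<le> k" "k \<le> leaves T"
  shows "dvalid d (grow d k T) \<and> leaves (grow d k T) = leaves T + d - 1 \<and>
    addrs (grow d k T) = take (k-1) (addrs T) @ blockl d (addrs T ! (k-1)) @ drop k (addrs T)"
  using assms
proof (induction T arbitrary: k)
  case Leaf
  then show ?case by (simp add: blockl_def comp_def addrsl_rep sum_list_replicate)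
next
  case (Node ts)
  have "\<forall>i k. (\<forall>t\<in>set ts. dvalid d t) \<longrightarrow> 1 \<le> k \<longrightarrow> k \<le> sum_list (map leaves ts) \<longrightarrow>
     (\<forall>t\<in>set (growl d k ts). dvalid d t) \<and> length (growl d k ts) = length ts \<and>
     sum_list (map leaves (growl d k ts)) = sum_list (map leaves ts) + d - 1 \<and>
     addrsl i (growl d k ts) = take (k-1) (addrsl i ts) @ blockl d (addrsl i ts ! (k-1)) @ drop k (addrsl i ts)"
    using Node.IH
  proof (induction ts)
    case Nil
    then show ?case by simp
  next
    case (Cons t ts)
    show ?case
    proof (intro allI impI)
      fix i k
      assume v: "\<forall>t\<in>set (t # ts). dvalid d t" and k1: "1 \<le> k" and k2: "k \<le> sum_list (map leaves (t # ts))"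
      show "(\<forall>t\<in>set (growl d k (t # ts)). dvalid d t) \<and> length (growl d k (t # ts)) = length (t # ts) \<and>
     sum_list (map leaves (growl d k (t # ts))) = sum_list (map leaves (t # ts)) + d - 1 \<and>
     addrsl i (growl d k (t # ts)) = take (k-1) (addrsl i (t # ts)) @ blockl d (addrsl i (t # ts) ! (k-1)) @ drop k (addrsl i (t # ts))"
      proof (cases "k \<le> leaves t")
        case True
        have IH: "dvalid d (grow d k t) \<and> leaves (grow d k t) = leaves t + d - 1 \<and>
          addrs (grow d k t) = take (k-1) (addrs t) @ blockl d (addrs t ! (k-1)) @ drop k (addrs t)"
          using Cons.prems v k1 True by auto
        have la: "length (addrs t) = leaves t" by (simp add: len_addrs)
        have "map (Cons i) (blockl d (addrs t ! (k - 1))) = blockl d ((map (Cons i) (addrs t) @ addrsl (Suc i) ts) ! (k - 1))"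
        proof -
          have "k - 1 < length (addrs t)" using True k1 la by simp
          then show ?thesis by (simp add: blockl_def nth_append)
        qed
        then show ?thesis using IH v True k1 la
          by (simp add: take_map drop_map)
      next
        case False
        let ?k = "k - leaves t"
        have IH: "(\<forall>t\<in>set (growl d ?k ts). dvalid d t) \<and> length (growl d ?k ts) = length ts \<and>
          sum_list (map leaves (growl d ?k ts)) = sum_list (map leaves ts) + d - 1 \<and>
          addrsl (Suc i) (growl d ?k ts) = take (?k-1) (addrsl (Suc i) ts) @ blockl d (addrsl (Suc i) ts ! (?k-1)) @ drop ?k (addrsl (Suc i) ts)"
        proof -
          have H: "\<forall>i k. (\<forall>t\<in>set ts. dvalid d t) \<longrightarrow> 1 \<le> k \<longrightarrow> k \<le> sum_list (map leaves ts) \<longrightarrow>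
     (\<forall>t\<in>set (growl d k ts). dvalid d t) \<and> length (growl d k ts) = length ts \<and>
     sum_list (map leaves (growl d k ts)) = sum_list (map leaves ts) + d - 1 \<and>
     addrsl i (growl d k ts) = take (k-1) (addrsl i ts) @ blockl d (addrsl i ts ! (k-1)) @ drop k (addrsl i ts)"
            using Cons.IH Cons.prems by auto
          show ?thesis using spec[OF spec[OF H, of "Suc i"], of ?k] v False k2 by auto
        qed
        have la: "length (addrs t) = leaves t" by (simp add: len_addrs)
        have e1: "k - 1 - leaves t = ?k - 1" using False by simp
        have nk: "\<not> k - 1 < leaves t" using False by simp
        have "sum_list (map leaves (growl d (k - leaves t) ts)) = sum_list (map leaves ts) + d - 1" using IH by simp
        moreover have "sum_list (map leaves ts) \<ge> 1" using False k2 by simp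
        ultimately have s: "leaves t + sum_list (map leaves (growl d (k - leaves t) ts)) = leaves t + sum_list (map leaves ts) + d - 1"
          by simp
        show ?thesis using IH v False la k2 nk s
          by (simp add: nth_append e1 Suc_diff_le)
      qed
    qed
  qed
  then show ?case using Node.prems by auto
qed

lemma mem_addrsl: "a \<in> set (addrsl i ts) \<longleftrightarrow> (\<exists>j<length ts. \<exists>a'. a = (i+j) # a' \<and> a' \<in> set (addrs (ts!j)))"
proof (induction ts arbitrary: i)
  case Nil then show ?case by simp
next
  case (Cons t ts)
  show ?case
  proof
    assume "a \<in> set (addrsl i (t # ts))"
    then consider "a \<in> set (map (Cons i) (addrs t))" | "a \<in> set (addrsl (Suc i) ts)" by auto
    then show "\<exists>j<length (t # ts). \<exists>a'. a = (i+j) # a' \<and> a' \<in> set (addrs ((t # ts)!j))"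
    proof cases
      case 1 then show ?thesis by force
    next
      case 2
      then obtain j a' where "j < length ts" "a = (Suc i + j) # a'" "a' \<in> set (addrs (ts!j))" using Cons.IH by blast
      then show ?thesis by (intro exI[of _ "Suc j"]) auto
    qed
  next
    assume "\<exists>j<length (t # ts). \<exists>a'. a = (i+j) # a' \<and> a' \<in> set (addrs ((t # ts)!j))"
    then obtain j a' where j: "j < length (t#ts)" "a = (i+j) # a'" "a' \<in> set (addrs ((t#ts)!j))" by blast
    show "a \<in> set (addrsl i (t # ts))"
    proof (cases j)
      case 0 then show ?thesis using j by auto
    next
      case (Suc j')
      then have "a \<in> set (addrsl (Suc i) ts)" using Cons.IH j by auto
      then show ?thesis by simp
    qed
  qed
qed

lemma mem_addrs_Node: "a \<in> set (addrs (Node ts)) \<longleftrightarrow> (\<exists>j<length ts. \<exists>a'. a = j # a' \<and> a' \<in> set (addrs (ts!j)))"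
  using mem_addrsl[of a 0 ts] by simp

lemma addrs_Node_ne: "a \<in> set (addrs (Node ts)) \<Longrightarrow> a \<noteq> []"
  using mem_addrs_Node by auto

lemma addrs_digits: "dvalid d t \<Longrightarrow> a \<in> set (addrs t) \<Longrightarrow> x \<in> set a \<Longrightarrow> x < d"
proof (induction t arbitrary: a)
  case Leaf then show ?case by simp
next
  case (Node ts)
  then obtain j a' where j: "j < length ts" "a = j # a'" "a' \<in> set (addrs (ts!j))" using mem_addrs_Node by blast
  show ?case
  proof (cases "x = j")
    case True then show ?thesis using j Node.prems by simp
  next
    case False
    then have "x \<in> set a'" using j Node.prems by simp
    moreover have "ts!j \<in> set ts" using j by (simp add: nth_mem)
    ultimately show ?thesis using Node.IH[of "ts!j" a'] Node.prems j by simp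
  qed
qed

lemma addrs_antichain: "a \<in> set (addrs t) \<Longrightarrow> a @ c \<in> set (addrs t) \<Longrightarrow> c = []"
proof (induction t arbitrary: a)
  case Leaf then show ?case by simp
next
  case (Node ts)
  then obtain j a' where j: "j < length ts" "a = j # a'" "a' \<in> set (addrs (ts!j))" using mem_addrs_Node by blast
  from Node.prems(2) obtain j2 a2 where j2: "j2 < length ts" "a @ c = j2 # a2" "a2 \<in> set (addrs (ts!j2))" using mem_addrs_Node by blast
  then have "j2 = j" "a2 = a' @ c" using j by auto
  moreover have "ts!j \<in> set ts" using j by (simp add: nth_mem)
  ultimately show ?case using Node.IH[of "ts!j" a'] j j2 by simp
qed

lemma hd_addrsl: "a \<in> set (addrsl i ts) \<Longrightarrow> a \<noteq> [] \<and> hd a \<ge> i"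
  using mem_addrsl by fastforce

lemma distinct_addrs: "distinct (addrs t)"
proof -
  have "\<forall>i. distinct (addrsl i ts)" if "\<forall>t\<in>set ts. distinct (addrs t)" for ts
    using that
  proof (induction ts)
    case Nil then show ?case by simp
  next
    case (Cons t ts)
    show ?case
    proof
      fix i
      have "distinct (map (Cons i) (addrs t))" using Cons.prems by (simp add: distinct_map)
      moreover have "distinct (addrsl (Suc i) ts)" using Cons by simp
      moreover have "set (map (Cons i) (addrs t)) \<inter> set (addrsl (Suc i) ts) = {}"
        using hd_addrsl[of _ "Suc i" ts] by fastforce
      ultimately show "distinct (addrsl i (t # ts))" by simp
    qed
  qed
  then show ?thesis by (induction t) auto
qed

lemma addrs_set_inj: "dvalid d T \<Longrightarrow> dvalid d T' \<Longrightarrow> set (addrs T) = set (addrs T') \<Longrightarrow> T = T'"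
proof (induction T arbitrary: T')
  case Leaf
  then have "set (addrs T') = {[]}" by simp
  then have "[] \<in> set (addrs T')" by simp
  then show ?case using addrs_Node_ne by (cases T') auto
next
  case (Node ts)
  show ?case
  proof (cases T')
    case Leaf
    then have "[] \<in> set (addrs (Node ts))" using Node.prems by simp
    then show ?thesis using addrs_Node_ne by blast
  next
    case (Node ts')
    have l: "length ts = d" "length ts' = d" using Node.prems \<open>T' = Node ts'\<close> by auto
    have "ts ! j = ts' ! j" if j: "j < d" for j
    proof -
      have "set (addrs (ts!j)) = {a. j # a \<in> set (addrs (Node ts))}"
        using j l by (auto simp: mem_addrsl)
      also have "\<dots> = {a. j # a \<in> set (addrs (Node ts'))}" using Node.prems \<open>T' = Node ts'\<close> by simp
      also have "\<dots> = set (addrs (ts'!j))" using j l by (auto simp: mem_addrsl)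
      finally show ?thesis using Node.IH[of "ts!j" "ts'!j"] Node.prems \<open>T' = Node ts'\<close> j l
        by (auto simp: nth_mem)
    qed
    then show ?thesis using l \<open>T' = Node ts'\<close> by (auto intro: nth_equalityI)
  qed
qed

lemma addrs_inj: "dvalid d T \<Longrightarrow> dvalid d T' \<Longrightarrow> addrs T = addrs T' \<Longrightarrow> T = T'"
  using addrs_set_inj by metis

lemma grow_valid: "dvalid d T \<Longrightarrow> 1 \<le> k \<Longrightarrow> k \<le> leaves T \<Longrightarrow> dvalid d (grow d k T)"
  using grow_props by blast
lemma grow_leaves: "dvalid d T \<Longrightarrow> 1 \<le> k \<Longrightarrow> k \<le> leaves T \<Longrightarrow> leaves (grow d k T) = leaves T + d - 1"
  using grow_props by blast
lemma grow_addrs: "dvalid d T \<Longrightarrow> 1 \<le> k \<Longrightarrow> k \<le> leaves T \<Longrightarrow>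
   addrs (grow d k T) = take (k-1) (addrs T) @ blockl d (addrs T ! (k-1)) @ drop k (addrs T)"
  using grow_props by blast

lemma grow_inj:
  assumes "d \<ge> 1" "dvalid d T" "dvalid d T'" "1 \<le> k" "k \<le> leaves T" "k \<le> leaves T'"
    "grow d k T = grow d k T'"
  shows "T = T'"
proof -
  let ?A = "addrs T" and ?B = "addrs T'"
  have lA: "length ?A = leaves T" "length ?B = leaves T'" by (simp_all add: len_addrs)
  have "leaves T + d - 1 = leaves T' + d - 1" using grow_leaves assms by metis
  then have ll: "leaves T = leaves T'" using assms(1) by simp
  have e: "take (k-1) ?A @ blockl d (?A ! (k-1)) @ drop k ?A = take (k-1) ?B @ blockl d (?B ! (k-1)) @ drop k ?B"
    using grow_addrs assms by metis
  have lt: "length (take (k-1) ?A) = length (take (k-1) ?B)" using lA ll by simp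
  have t: "take (k-1) ?A = take (k-1) ?B" using append_eq_append_conv[OF disjI1[OF lt]] e by blast
  with e have e2: "blockl d (?A ! (k-1)) @ drop k ?A = blockl d (?B ! (k-1)) @ drop k ?B" by simp
  have lb: "length (blockl d (?A ! (k-1))) = length (blockl d (?B ! (k-1)))" by (simp add: blockl_def)
  have b: "blockl d (?A ! (k-1)) = blockl d (?B ! (k-1))" and dr: "drop k ?A = drop k ?B"
    using append_eq_append_conv[OF disjI1[OF lb]] e2 by blast+
  have b0: "blockl d x ! 0 = x @ [0]" for x using assms(1) by (simp add: blockl_def)
  from b have "?A ! (k-1) = ?B ! (k-1)" using b0[of "?A ! (k-1)"] b0[of "?B ! (k-1)"] by simp
  moreover have "k - 1 < length ?A" "k - 1 < length ?B" using lA ll assms by auto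
  moreover have "Suc (k-1) = k" using assms by simp
  ultimately have "?A = ?B"
    using t dr id_take_nth_drop[of "k-1" ?A] id_take_nth_drop[of "k-1" ?B]
    by simp
  then show ?thesis using addrs_inj assms by blast
qed

lemma blk_start_simps: "j \<le> k \<Longrightarrow> blk_start d k j = j" "j > k \<Longrightarrow> blk_start d k j = j + d - 1"
  by (auto simp: blk_start_def)

lemma nth_append_3: "length P = p \<Longrightarrow> length Q = q \<Longrightarrow> (P @ Q @ R) ! (p + q + i) = R ! i"
  by (simp add: nth_append)

lemma take_append_3: "length P = p \<Longrightarrow> length Q = q \<Longrightarrow> take (p + q + m) (P @ Q @ R) = P @ Q @ take m R"
  by simp
lemma drop_append_3: "length P = p \<Longrightarrow> length Q = q \<Longrightarrow> drop (p + q + m) (P @ Q @ R) = drop m R"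
  by simp
lemma take_app_le: "n \<le> length xs \<Longrightarrow> take n (xs @ ys) = take n xs"
  by simp
lemma len_blockl[simp]: "length (blockl d x) = d" by (simp add: blockl_def)

lemma grow_diamond_lt:
  assumes "d \<ge> 1" "dvalid d T" "1 \<le> a" "a < b" "b \<le> leaves T"
  shows "grow d (b + d - 1) (grow d a T) = grow d a (grow d b T)"
proof -
  let ?A = "addrs T"
  have lA: "length ?A = leaves T" by (simp add: len_addrs)
  have v1: "dvalid d (grow d a T)" "leaves (grow d a T) = leaves T + d - 1"
    using assms grow_valid grow_leaves by auto
  have v2: "dvalid d (grow d b T)" "leaves (grow d b T) = leaves T + d - 1"
    using assms grow_valid grow_leaves by auto
  have L: "addrs (grow d (b + d - 1) (grow d a T)) = take (a-1) ?A @ blockl d (?A ! (a-1)) @ take (b-a-1) (drop a ?A) @ blockl d (?A!(b-1)) @ drop b ?A"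
  proof -
    let ?P = "take (a-1) ?A" and ?Q = "blockl d (?A ! (a-1))" and ?R = "drop a ?A"
    have lP: "length ?P = a - 1" using assms lA by simp
    have lQ: "length ?Q = d" by simp
    have g1: "addrs (grow d a T) = ?P @ ?Q @ ?R"
      using grow_addrs assms by auto
    have g2: "addrs (grow d (b+d-1) (grow d a T)) = take (b+d-1-1) (addrs (grow d a T)) @ blockl d (addrs (grow d a T) ! (b+d-1-1)) @ drop (b+d-1) (addrs (grow d a T))"
      using grow_addrs[of d "grow d a T" "b+d-1"] v1 assms by simp
    have ii: "b+d-1-1 = (a-1) + d + (b-a-1)" using assms by arith
    have ii2: "b+d-1 = (a-1) + d + (b-a)" using assms by arith
    have n1: "addrs (grow d a T) ! (b+d-1-1) = ?A ! (b-1)"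
    proof -
      have "addrs (grow d a T) ! (b+d-1-1) = ?R ! (b-a-1)"
        unfolding g1 ii using nth_append_3[OF lP lQ] by blast
      also have "\<dots> = ?A ! (b-1)" using assms lA by simp
      finally show ?thesis .
    qed
    have n2: "take (b+d-1-1) (addrs (grow d a T)) = ?P @ ?Q @ take (b-a-1) ?R"
      unfolding g1 ii using take_append_3[OF lP lQ] by blast
    have n3: "drop (b+d-1) (addrs (grow d a T)) = drop b ?A"
    proof -
      have "drop (b+d-1) (addrs (grow d a T)) = drop (b-a) ?R"
        unfolding g1 ii2 using drop_append_3[OF lP lQ] by blast
      also have "\<dots> = drop b ?A" using assms by simp
      finally show ?thesis .
    qed
    show ?thesis using g2 n1 n2 n3 by simp
  qed
  have R: "addrs (grow d a (grow d b T)) = take (a-1) ?A @ blockl d (?A ! (a-1)) @ take (b-a-1) (drop a ?A) @ blockl d (?A!(b-1)) @ drop b ?A"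
  proof -
    let ?P = "take (b-1) ?A" and ?Q = "blockl d (?A ! (b-1))" and ?R = "drop b ?A"
    have lP: "length ?P = b - 1" using assms lA by simp
    have g1: "addrs (grow d b T) = ?P @ ?Q @ ?R"
      using grow_addrs assms by auto
    have g2: "addrs (grow d a (grow d b T)) = take (a-1) (addrs (grow d b T)) @ blockl d (addrs (grow d b T) ! (a-1)) @ drop a (addrs (grow d b T))"
      using grow_addrs[of d "grow d b T" a] v2 assms by simp
    have n1: "addrs (grow d b T) ! (a-1) = ?A ! (a-1)"
    proof -
      have "a - 1 < length ?P" using lP assms by simp
      then have "(?P @ ?Q @ ?R) ! (a-1) = ?P ! (a-1)" by (simp add: nth_append)
      then show ?thesis using g1 assms by simp
    qed
    have n2: "take (a-1) (addrs (grow d b T)) = take (a-1) ?A"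
    proof -
      have "a - 1 \<le> length ?P" using lP assms by simp
      then have "take (a-1) (?P @ ?Q @ ?R) = take (a-1) ?P" by (rule take_app_le)
      moreover have "take (a-1) ?P = take (a-1) ?A" using assms by (simp add: min_def)
      ultimately show ?thesis using g1 by simp
    qed
    have n3: "drop a (addrs (grow d b T)) = take (b-a-1) (drop a ?A) @ ?Q @ ?R"
    proof -
      have "a \<le> length ?P" using lP assms by simp
      then have "drop a (?P @ ?Q @ ?R) = drop a ?P @ ?Q @ ?R" by simp
      moreover have "drop a ?P = take (b-a-1) (drop a ?A)" by (simp add: drop_take)
      ultimately show ?thesis using g1 by simp
    qed
    show ?thesis using g2 n1 n2 n3 by simp
  qed
  have "dvalid d (grow d (b + d - 1) (grow d a T))" using v1 assms grow_valid by simp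
  moreover have "dvalid d (grow d a (grow d b T))" using v2 assms grow_valid by simp
  ultimately show ?thesis using L R addrs_inj by metis
qed

lemma grow_diamond:
  assumes "d \<ge> 1" "dvalid d T" "1 \<le> a" "a \<le> leaves T" "1 \<le> b" "b \<le> leaves T" "a \<noteq> b"
  shows "grow d (blk_start d a b) (grow d a T) = grow d (blk_start d b a) (grow d b T)"
proof (cases "a < b")
  case True then show ?thesis using grow_diamond_lt[of d T a b] assms by (simp add: blk_start_def)
next
  case False then have "b < a" using assms by simp
  then show ?thesis using grow_diamond_lt[of d T b a] assms by (simp add: blk_start_def)
qed


definition le :: "dtree \<Rightarrow> dtree \<Rightarrow> bool" where
  "le V W \<longleftrightarrow> (\<forall>w\<in>set (addrs W). \<exists>v\<in>set (addrs V). \<exists>c. w = v @ c)"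

lemma le_refl: "le V V" by (auto simp: le_def)

lemma le_trans: "le U V \<Longrightarrow> le V W \<Longrightarrow> le U W"
  unfolding le_def by (metis append.assoc)

lemma le_Leaf: "le Leaf W" by (simp add: le_def)

fun join :: "dtree \<Rightarrow> dtree \<Rightarrow> dtree" and joinl :: "dtree list \<Rightarrow> dtree list \<Rightarrow> dtree list" where
  "join Leaf W = W"
| "join (Node vs) Leaf = Node vs"
| "join (Node vs) (Node ws) = Node (joinl vs ws)"
| "joinl [] ws = ws"
| "joinl (v # vs) [] = v # vs"
| "joinl (v # vs) (w # ws) = join v w # joinl vs ws"

lemma joinl_len: "length vs = length ws \<Longrightarrow> length (joinl vs ws) = length vs"
proof (induction vs arbitrary: ws)
  case Nil then show ?case by simp
next
  case (Cons v vs)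
  then obtain w ws' where "ws = w # ws'" by (cases ws) auto
  then show ?case using Cons by simp
qed

lemma joinl_nth: "length vs = length ws \<Longrightarrow> i < length vs \<Longrightarrow> joinl vs ws ! i = join (vs!i) (ws!i)"
proof (induction vs arbitrary: ws i)
  case Nil then show ?case by simp
next
  case (Cons v vs)
  then obtain w ws' where "ws = w # ws'" by (cases ws) auto
  then show ?case using Cons by (cases i) auto
qed

lemma join_props:
  "dvalid d V \<Longrightarrow> dvalid d W \<Longrightarrow> dvalid d (join V W) \<and>
     (\<forall>a. a \<in> set (addrs (join V W)) \<longrightarrow> ((\<exists>v\<in>set (addrs V). \<exists>c. a = v @ c) \<and> (\<exists>v\<in>set (addrs W). \<exists>c. a = v @ c))) \<and>
     (\<forall>a. a \<in> set (addrs V) \<longrightarrow> a \<in> set (addrs W) \<longrightarrow> a \<in> set (addrs (join V W)))"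
proof (induction V arbitrary: W)
  case Leaf
  then show ?case by auto
next
  case (Node vs)
  show ?case
  proof (cases W)
    case Leaf
    then show ?thesis using Node.prems by auto
  next
    case (Node ws)
    have l: "length vs = d" "length ws = d" using Node.prems \<open>W = Node ws\<close> by auto
    have jl: "length (joinl vs ws) = d" using l joinl_len by simp
    have IH: "dvalid d (join (vs!i) (ws!i)) \<and>
     (\<forall>a. a \<in> set (addrs (join (vs!i) (ws!i))) \<longrightarrow> ((\<exists>v\<in>set (addrs (vs!i)). \<exists>c. a = v @ c) \<and> (\<exists>v\<in>set (addrs (ws!i)). \<exists>c. a = v @ c))) \<and>
     (\<forall>a. a \<in> set (addrs (vs!i)) \<longrightarrow> a \<in> set (addrs (ws!i)) \<longrightarrow> a \<in> set (addrs (join (vs!i) (ws!i))))"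
      if "i < d" for i
      using Node.IH[of "vs!i" "ws!i"] Node.prems \<open>W = Node ws\<close> l that by (auto simp: nth_mem)
    have jn: "joinl vs ws ! i = join (vs!i) (ws!i)" if "i < d" for i using joinl_nth l that by simp
    have v: "dvalid d (join (Node vs) W)"
      using IH jn jl \<open>W = Node ws\<close> by (auto simp: in_set_conv_nth)
    have a1: "(\<exists>v\<in>set (addrs (Node vs)). \<exists>c. a = v @ c) \<and> (\<exists>v\<in>set (addrs W). \<exists>c. a = v @ c)"
      if "a \<in> set (addrs (join (Node vs) W))" for a
    proof -
      from that obtain j a' where j: "j < d" "a = j # a'" "a' \<in> set (addrs (joinl vs ws ! j))"
        using \<open>W = Node ws\<close> mem_addrs_Node[of a "joinl vs ws"] jl by auto
      then obtain v1 c1 v2 c2 where "v1 \<in> set (addrs (vs!j))" "a' = v1 @ c1" "v2 \<in> set (addrs (ws!j))" "a' = v2 @ c2"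
        using IH jn by metis
      then show ?thesis using j l \<open>W = Node ws\<close> mem_addrs_Node
        by (metis Cons_eq_appendI)
    qed
    have a2: "a \<in> set (addrs (join (Node vs) W))" if "a \<in> set (addrs (Node vs))" "a \<in> set (addrs W)" for a
    proof -
      from that(1) obtain j a' where j: "j < d" "a = j # a'" "a' \<in> set (addrs (vs ! j))"
        using mem_addrs_Node l by auto
      moreover have "a' \<in> set (addrs (ws ! j))" using that(2) j \<open>W = Node ws\<close> l mem_addrs_Node by auto
      ultimately have "a' \<in> set (addrs (joinl vs ws ! j))" using IH jn by metis
      then show ?thesis using j jl \<open>W = Node ws\<close> mem_addrs_Node[of a "joinl vs ws"] by auto
    qed
    show ?thesis using v a1 a2 by blast
  qed
qed

lemma join_valid: "dvalid d V \<Longrightarrow> dvalid d W \<Longrightarrow> dvalid d (join V W)"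
  using join_props by blast
lemma join_le1: "dvalid d V \<Longrightarrow> dvalid d W \<Longrightarrow> le V (join V W)"
  using join_props unfolding le_def by blast
lemma join_le2: "dvalid d V \<Longrightarrow> dvalid d W \<Longrightarrow> le W (join V W)"
  using join_props unfolding le_def by blast
lemma join_leaf: "dvalid d V \<Longrightarrow> dvalid d W \<Longrightarrow> a \<in> set (addrs V) \<Longrightarrow> a \<in> set (addrs W) \<Longrightarrow> a \<in> set (addrs (join V W))"
  using join_props by blast

lemma addrs_ne: "d \<ge> 1 \<Longrightarrow> dvalid d T \<Longrightarrow> addrs T \<noteq> []"
  using leaves_pos len_addrs by (metis le_zero_eq length_0_conv not_one_le_zero)

lemma comparable_leaf:
  assumes "d \<ge> 1" "dvalid d T" "\<forall>x\<in>set a. x < d"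
  shows "\<exists>w\<in>set (addrs T). (\<exists>c. a = w @ c) \<or> (\<exists>c. w = a @ c)"
  using assms(2,3)
proof (induction T arbitrary: a)
  case Leaf then show ?case by simp
next
  case (Node ts)
  show ?case
  proof (cases a)
    case Nil
    have "addrs (Node ts) \<noteq> []" using addrs_ne[OF assms(1) Node.prems(1)] .
    then obtain w where "w \<in> set (addrs (Node ts))" by (meson list.set_sel(1))
    then show ?thesis using Nil by auto
  next
    case (Cons i a')
    then have i: "i < length ts" using Node.prems by auto
    have "ts!i \<in> set ts" using i by (rule nth_mem)
    moreover have "\<forall>x\<in>set a'. x < d" using Node.prems Cons by auto
    ultimately obtain w where w: "w \<in> set (addrs (ts!i))" "(\<exists>c. a' = w @ c) \<or> (\<exists>c. w = a' @ c)"
      using Node.IH[of "ts!i" a'] Node.prems by auto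
    have "i # w \<in> set (addrs (Node ts))" using mem_addrs_Node[of "i # w" ts] i w(1) by blast
    moreover have "(\<exists>c. a = (i#w) @ c) \<or> (\<exists>c. i#w = a @ c)" using w(2) Cons by auto
    ultimately show ?thesis by blast
  qed
qed

lemma prefix_cases: "v @ c = v' @ c' \<Longrightarrow> (\<exists>e. v' = v @ e) \<or> (\<exists>e. v = v' @ e)"
  using append_eq_append_conv2[of v c v' c'] by blast

lemma leaf_prefix_unique: "v \<in> set (addrs V) \<Longrightarrow> v' \<in> set (addrs V) \<Longrightarrow> w = v @ c \<Longrightarrow> w = v' @ c' \<Longrightarrow> v = v'"
proof -
  assume a: "v \<in> set (addrs V)" "v' \<in> set (addrs V)" "w = v @ c" "w = v' @ c'"
  then consider e where "v' = v @ e" | e where "v = v' @ e" using prefix_cases by metis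
  then show "v = v'"
  proof cases
    case 1 then show ?thesis using addrs_antichain[OF a(1)] a(2) by simp
  next
    case 2 then show ?thesis using addrs_antichain[OF a(2)] a(1) by simp
  qed
qed

lemma le_leaves:
  assumes "d \<ge> 1" "dvalid d V" "dvalid d W" "le V W"
  shows "leaves V \<le> leaves W"
proof -
  have ex: "\<forall>v\<in>set (addrs V). \<exists>w\<in>set (addrs W). \<exists>c. w = v @ c"
  proof
    fix v assume v: "v \<in> set (addrs V)"
    have "\<forall>x\<in>set v. x < d" using addrs_digits assms v by blast
    then obtain w where w: "w \<in> set (addrs W)" "(\<exists>c. v = w @ c) \<or> (\<exists>c. w = v @ c)"
      using comparable_leaf assms by blast
    show "\<exists>w\<in>set (addrs W). \<exists>c. w = v @ c"
    proof (cases "\<exists>c. w = v @ c")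
      case True then show ?thesis using w by blast
    next
      case False
      then obtain c where c: "v = w @ c" using w by blast
      obtain v' c' where v': "v' \<in> set (addrs V)" "w = v' @ c'" using assms(4) w unfolding le_def by blast
      then have "v = v' @ (c' @ c)" using c by simp
      then have "c' @ c = []" using addrs_antichain v' v by metis
      then show ?thesis using c w by auto
    qed
  qed
  define f where "f w = (SOME v. v \<in> set (addrs V) \<and> (\<exists>c. w = v @ c))" for w
  have "v = f w" if "v \<in> set (addrs V)" "w = v @ c" for v w c
  proof -
    have ex1: "\<exists>v. v \<in> set (addrs V) \<and> (\<exists>c. w = v @ c)" using that by blast
    have "f w \<in> set (addrs V) \<and> (\<exists>c. w = f w @ c)" unfolding f_def by (rule someI_ex[OF ex1])
    then show ?thesis using leaf_prefix_unique that by metis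
  qed
  then have "set (addrs V) \<subseteq> f ` set (addrs W)" using ex by blast
  then have "card (set (addrs V)) \<le> card (f ` set (addrs W))" by (simp add: card_mono)
  also have "\<dots> \<le> card (set (addrs W))" by (rule card_image_le) simp
  finally show ?thesis using distinct_card[OF distinct_addrs] len_addrs by metis
qed

lemma set_grow_addrs:
  assumes "dvalid d V" "1 \<le> k" "k \<le> leaves V"
  shows "set (addrs (grow d k V)) = (set (addrs V) - {addrs V ! (k-1)}) \<union> set (blockl d (addrs V ! (k-1)))"
proof -
  let ?A = "addrs V"
  have lA: "length ?A = leaves V" by (simp add: len_addrs)
  have k: "k - 1 < length ?A" using assms lA by simp
  have dA: "distinct ?A" by (rule distinct_addrs)
  have eq: "?A = take (k-1) ?A @ [?A!(k-1)] @ drop k ?A"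
    using id_take_nth_drop[OF k] assms by simp
  have "distinct (take (k-1) ?A @ [?A!(k-1)] @ drop k ?A)" using dA by (simp only: eq[symmetric])
  then have nin: "?A!(k-1) \<notin> set (take (k-1) ?A) \<union> set (drop k ?A)" by auto
  have "set ?A = set (take (k-1) ?A @ [?A!(k-1)] @ drop k ?A)" using eq by simp
  then have "set ?A = set (take (k-1) ?A) \<union> {?A!(k-1)} \<union> set (drop k ?A)" by auto
  then have "set ?A - {?A!(k-1)} = set (take (k-1) ?A) \<union> set (drop k ?A)" using nin by blast
  then show ?thesis using grow_addrs[OF assms] by auto
qed

lemma le_grow: "dvalid d V \<Longrightarrow> 1 \<le> k \<Longrightarrow> k \<le> leaves V \<Longrightarrow> le V (grow d k V)"
  unfolding le_def
proof
  fix w assume a: "dvalid d V" "1 \<le> k" "k \<le> leaves V" "w \<in> set (addrs (grow d k V))"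
  then consider "w \<in> set (addrs V)" | "w \<in> set (blockl d (addrs V ! (k-1)))" using set_grow_addrs by blast
  then show "\<exists>v\<in>set (addrs V). \<exists>c. w = v @ c"
  proof cases
    case 1 then show ?thesis by (intro bexI[of _ w]) auto
  next
    case 2
    have "addrs V ! (k-1) \<in> set (addrs V)" using a by (simp add: len_addrs)
    then show ?thesis using 2 by (auto simp: blockl_def)
  qed
qed

lemma le_grow_internal:
  assumes "dvalid d V" "dvalid d W" "le V W" "1 \<le> k" "k \<le> leaves V" "addrs V ! (k-1) \<notin> set (addrs W)"
  shows "le (grow d k V) W"
  unfolding le_def
proof
  fix w assume w: "w \<in> set (addrs W)"
  then obtain v c where v: "v \<in> set (addrs V)" "w = v @ c" using assms(3) le_def by blast
  show "\<exists>v\<in>set (addrs (grow d k V)). \<exists>c. w = v @ c"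
  proof (cases "v = addrs V ! (k-1)")
    case False
    then show ?thesis using v set_grow_addrs[OF assms(1,4,5)] by blast
  next
    case True
    then have "c \<noteq> []" using assms(6) w v by auto
    then obtain x c' where "c = x # c'" by (cases c) auto
    moreover have "x < d" using addrs_digits[OF assms(2) w] v \<open>c = x # c'\<close> by simp
    ultimately have "v @ [x] \<in> set (addrs (grow d k V))" "w = (v @ [x]) @ c'"
      using set_grow_addrs[OF assms(1,4,5)] True v by (auto simp: blockl_def)
    then show ?thesis by blast
  qed
qed

lemma le_neq_internal:
  assumes "dvalid d V" "dvalid d W" "le V W" "V \<noteq> W"
  shows "\<exists>k. 1 \<le> k \<and> k \<le> leaves V \<and> addrs V ! (k-1) \<notin> set (addrs W)"
proof (rule ccontr)
  assume "\<not> ?thesis"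
  then have "\<forall>k. 1 \<le> k \<and> k \<le> leaves V \<longrightarrow> addrs V ! (k-1) \<in> set (addrs W)" by blast
  have sub: "set (addrs V) \<subseteq> set (addrs W)"
  proof
    fix v assume "v \<in> set (addrs V)"
    then obtain i where i: "i < length (addrs V)" "v = addrs V ! i" by (auto simp: in_set_conv_nth)
    then have "1 \<le> Suc i \<and> Suc i \<le> leaves V" by (simp add: len_addrs)
    then have "addrs V ! (Suc i - 1) \<in> set (addrs W)" using \<open>\<forall>k. _\<close> by blast
    then show "v \<in> set (addrs W)" using i by simp
  qed
  have "set (addrs W) \<subseteq> set (addrs V)"
  proof
    fix w assume w: "w \<in> set (addrs W)"
    then obtain v c where "v \<in> set (addrs V)" "w = v @ c" using assms(3) le_def by blast
    then have "c = []" using addrs_antichain[of v W c] sub w by blast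
    then show "w \<in> set (addrs V)" using \<open>v \<in> set (addrs V)\<close> \<open>w = v @ c\<close> by simp
  qed
  then have "V = W" using sub addrs_set_inj assms by blast
  then show False using assms by simp
qed

lemma nth_app_lt: "i < length xs \<Longrightarrow> (xs @ ys) ! i = xs ! i"
  by (simp add: nth_append)
lemma nth_app_mid: "length P = p \<Longrightarrow> i < length Q \<Longrightarrow> (P @ Q @ R) ! (p + i) = Q ! i"
  by (simp add: nth_append)

lemma addr_grow_before: "dvalid d V \<Longrightarrow> 1 \<le> k \<Longrightarrow> k \<le> leaves V \<Longrightarrow> 1 \<le> j \<Longrightarrow> j < k \<Longrightarrow>
   addrs (grow d k V) ! (j-1) = addrs V ! (j-1)"
proof -
  assume a: "dvalid d V" "1 \<le> k" "k \<le> leaves V" "1 \<le> j" "j < k"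
  have l: "j - 1 < length (take (k-1) (addrs V))" using a by (simp add: len_addrs)
  have "addrs (grow d k V) ! (j-1) = take (k-1) (addrs V) ! (j-1)"
    using grow_addrs[OF a(1-3)] nth_app_lt[OF l] by simp
  then show ?thesis using a by simp
qed

lemma addr_grow_block: "dvalid d V \<Longrightarrow> 1 \<le> k \<Longrightarrow> k \<le> leaves V \<Longrightarrow> i < d \<Longrightarrow>
   addrs (grow d k V) ! (k-1+i) = addrs V ! (k-1) @ [i]"
proof -
  assume a: "dvalid d V" "1 \<le> k" "k \<le> leaves V" "i < d"
  have l: "length (take (k-1) (addrs V)) = k - 1" using a by (simp add: len_addrs)
  have i: "i < length (blockl d (addrs V ! (k-1)))" using a by simp
  have "addrs (grow d k V) ! (k-1+i) = blockl d (addrs V ! (k-1)) ! i"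
    using grow_addrs[OF a(1-3)] nth_app_mid[OF l i] by simp
  then show ?thesis using a by (simp add: blockl_def)
qed

lemma addr_grow_after: "dvalid d V \<Longrightarrow> 1 \<le> k \<Longrightarrow> k < j \<Longrightarrow> j \<le> leaves V \<Longrightarrow>
   addrs (grow d k V) ! (j + d - 1 - 1) = addrs V ! (j-1)"
proof -
  assume a: "dvalid d V" "1 \<le> k" "k < j" "j \<le> leaves V"
  have l: "length (take (k-1) (addrs V)) = k - 1" using a by (simp add: len_addrs)
  have ii: "j + d - 1 - 1 = (k-1) + d + (j - k - 1)" using a by arith
  have "addrs (grow d k V) ! (j + d - 1 - 1) = drop k (addrs V) ! (j - k - 1)"
    using grow_addrs[OF a(1,2)] a nth_append_3[OF l len_blockl, where R="drop k (addrs V)" and i="j-k-1"] ii by simp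
  also have "\<dots> = addrs V ! (j-1)" using a by (simp add: len_addrs)
  finally show ?thesis .
qed

lemma addr_grow_shift: "dvalid d V \<Longrightarrow> 1 \<le> k \<Longrightarrow> k \<le> leaves V \<Longrightarrow> 1 \<le> j \<Longrightarrow> j \<le> leaves V \<Longrightarrow> j \<noteq> k \<Longrightarrow>
   addrs (grow d k V) ! (blk_start d k j - 1) = addrs V ! (j-1)"
proof -
  assume a: "dvalid d V" "1 \<le> k" "k \<le> leaves V" "1 \<le> j" "j \<le> leaves V" "j \<noteq> k"
  show ?thesis
  proof (cases "j < k")
    case True
    then have "blk_start d k j = j" by (simp add: blk_start_def)
    then show ?thesis using addr_grow_before a True by simp
  next
    case False
    then have "blk_start d k j = j + d - 1" "k < j" using a by (auto simp: blk_start_def)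
    then show ?thesis using addr_grow_after[of d V k j] a by simp
  qed
qed


locale csys =
  fixes d :: nat and G :: "nat \<Rightarrow> 'g monoid" and \<rho> :: "nat \<Rightarrow> 'g \<Rightarrow> nat \<Rightarrow> nat"
    and \<kappa> :: "nat \<Rightarrow> nat \<Rightarrow> 'g \<Rightarrow> 'g"
  assumes cs: "cloning_system d G \<rho> \<kappa>"
begin

lemma d2: "2 \<le> d" using cs unfolding cloning_system_def by auto
lemma d1: "1 \<le> d" using d2 by simp
lemma grp: "1 \<le> n \<Longrightarrow> group (G n)" using cs unfolding cloning_system_def by auto
lemma hom: "1 \<le> n \<Longrightarrow> \<rho> n \<in> hom (G n) (sym_group n)" using cs unfolding cloning_system_def by auto
lemma kap_closed: "1 \<le> n \<Longrightarrow> 1 \<le> k \<Longrightarrow> k \<le> n \<Longrightarrow> g \<in> carrier (G n) \<Longrightarrow> \<kappa> n k g \<in> carrier (G (n+d-1))"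
  using cs unfolding cloning_system_def by (auto simp: Pi_def)
lemma kap_inj: "1 \<le> n \<Longrightarrow> 1 \<le> k \<Longrightarrow> k \<le> n \<Longrightarrow> inj_on (\<kappa> n k) (carrier (G n))"
  using cs unfolding cloning_system_def by auto
lemma C1: "1 \<le> n \<Longrightarrow> 1 \<le> k \<Longrightarrow> k \<le> n \<Longrightarrow> g \<in> carrier (G n) \<Longrightarrow> h \<in> carrier (G n) \<Longrightarrow>
  \<kappa> n k (g \<otimes>\<^bsub>G n\<^esub> h) = \<kappa> n (\<rho> n h k) g \<otimes>\<^bsub>G (n + d - 1)\<^esub> \<kappa> n k h"
  using cs unfolding cloning_system_def by auto
lemma C2: "1 \<le> n \<Longrightarrow> 1 \<le> k \<Longrightarrow> k < l \<Longrightarrow> l \<le> n \<Longrightarrow> g \<in> carrier (G n) \<Longrightarrow>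
  \<kappa> (n + d - 1) k (\<kappa> n l g) = \<kappa> (n + d - 1) (l + d - 1) (\<kappa> n k g)"
  using cs unfolding cloning_system_def by auto
lemma C3: "1 \<le> n \<Longrightarrow> 1 \<le> k \<Longrightarrow> k \<le> n \<Longrightarrow> g \<in> carrier (G n) \<Longrightarrow> i \<notin> {k..k + d - 1} \<Longrightarrow>
  \<rho> (n + d - 1) (\<kappa> n k g) i = sclone d n k (\<rho> n g) i"
  using cs unfolding cloning_system_def by auto

lemma rho_perm: "1 \<le> n \<Longrightarrow> g \<in> carrier (G n) \<Longrightarrow> \<rho> n g permutes {1..n}"
proof -
  assume "1 \<le> n" "g \<in> carrier (G n)"
  then have "\<rho> n g \<in> carrier (sym_group n)" using hom[of n] unfolding hom_def by auto
  then show ?thesis by (simp add: sym_group_carrier)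
qed

lemma rho_range: "1 \<le> n \<Longrightarrow> g \<in> carrier (G n) \<Longrightarrow> 1 \<le> k \<Longrightarrow> k \<le> n \<Longrightarrow> 1 \<le> \<rho> n g k \<and> \<rho> n g k \<le> n"
  using rho_perm permutes_in_image by fastforce

lemma rho_inj: "1 \<le> n \<Longrightarrow> g \<in> carrier (G n) \<Longrightarrow> \<rho> n g k = \<rho> n g j \<Longrightarrow> k = j"
  using rho_perm permutes_inj by (metis injD)

lemma rho_mult: "1 \<le> n \<Longrightarrow> g \<in> carrier (G n) \<Longrightarrow> h \<in> carrier (G n) \<Longrightarrow> \<rho> n (g \<otimes>\<^bsub>G n\<^esub> h) = \<rho> n g \<circ> \<rho> n h"
  using hom hom_mult sym_group_mult by metis

lemma rho_one: "1 \<le> n \<Longrightarrow> \<rho> n \<one>\<^bsub>G n\<^esub> = id"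
proof -
  assume n: "1 \<le> n"
  interpret group "G n" using grp n .
  let ?p = "\<rho> n \<one>\<^bsub>G n\<^esub>"
  have "?p = ?p \<circ> ?p" using rho_mult[OF n, of "\<one>\<^bsub>G n\<^esub>" "\<one>\<^bsub>G n\<^esub>"] by simp
  moreover have "inj ?p" using rho_perm[OF n one_closed] permutes_inj by simp
  ultimately show ?thesis by (metis comp_apply eq_id_iff injD)
qed

lemma rho_inv: "1 \<le> n \<Longrightarrow> g \<in> carrier (G n) \<Longrightarrow> \<rho> n (inv\<^bsub>G n\<^esub> g) (\<rho> n g k) = k"
proof -
  assume n: "1 \<le> n" and g: "g \<in> carrier (G n)"
  interpret group "G n" using grp n .
  have "\<rho> n (inv\<^bsub>G n\<^esub> g \<otimes>\<^bsub>G n\<^esub> g) = id" using rho_one n g by simp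
  then show ?thesis using rho_mult[OF n, of "inv\<^bsub>G n\<^esub> g" g] g by (metis comp_apply id_apply inv_closed)
qed

lemma rho_inv2: "1 \<le> n \<Longrightarrow> g \<in> carrier (G n) \<Longrightarrow> \<rho> n g (\<rho> n (inv\<^bsub>G n\<^esub> g) k) = k"
proof -
  assume n: "1 \<le> n" and g: "g \<in> carrier (G n)"
  interpret group "G n" using grp n .
  have "\<rho> n (g \<otimes>\<^bsub>G n\<^esub> inv\<^bsub>G n\<^esub> g) = id" using rho_one n g by simp
  then show ?thesis using rho_mult[OF n, of g "inv\<^bsub>G n\<^esub> g"] g by (metis comp_apply id_apply inv_closed)
qed

lemma kap_one: "1 \<le> n \<Longrightarrow> 1 \<le> k \<Longrightarrow> k \<le> n \<Longrightarrow> \<kappa> n k \<one>\<^bsub>G n\<^esub> = \<one>\<^bsub>G (n+d-1)\<^esub>"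
proof -
  assume a: "1 \<le> n" "1 \<le> k" "k \<le> n"
  interpret H: group "G (n+d-1)" using grp[of "n+d-1"] a d1 by simp
  interpret group "G n" using grp a by simp
  let ?x = "\<kappa> n k \<one>\<^bsub>G n\<^esub>"
  have x: "?x \<in> carrier (G (n+d-1))" using kap_closed a by simp
  have "?x = ?x \<otimes>\<^bsub>G (n+d-1)\<^esub> ?x" using C1[OF a, of "\<one>\<^bsub>G n\<^esub>" "\<one>\<^bsub>G n\<^esub>"] rho_one a by simp
  then show ?thesis using x H.l_cancel_one' by blast
qed

lemma kap_inv: "1 \<le> n \<Longrightarrow> 1 \<le> k \<Longrightarrow> k \<le> n \<Longrightarrow> g \<in> carrier (G n) \<Longrightarrow>
  \<kappa> n (\<rho> n g k) (inv\<^bsub>G n\<^esub> g) = inv\<^bsub>G (n+d-1)\<^esub> (\<kappa> n k g)"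
proof -
  assume a: "1 \<le> n" "1 \<le> k" "k \<le> n" and g: "g \<in> carrier (G n)"
  interpret H: group "G (n+d-1)" using grp[of "n+d-1"] a d1 by simp
  interpret group "G n" using grp a by simp
  have "\<kappa> n k (inv\<^bsub>G n\<^esub> g \<otimes>\<^bsub>G n\<^esub> g) = \<kappa> n (\<rho> n g k) (inv\<^bsub>G n\<^esub> g) \<otimes>\<^bsub>G (n + d - 1)\<^esub> \<kappa> n k g"
    using C1[OF a, of "inv\<^bsub>G n\<^esub> g" g] g by simp
  then have "\<kappa> n (\<rho> n g k) (inv\<^bsub>G n\<^esub> g) \<otimes>\<^bsub>G (n + d - 1)\<^esub> \<kappa> n k g = \<one>\<^bsub>G (n+d-1)\<^esub>"
    using kap_one a g by simp
  moreover have "\<kappa> n (\<rho> n g k) (inv\<^bsub>G n\<^esub> g) \<in> carrier (G (n+d-1))"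
    using kap_closed rho_range a g by simp
  moreover have "\<kappa> n k g \<in> carrier (G (n+d-1))" using kap_closed a g by simp
  ultimately show ?thesis using H.inv_equality by metis
qed

lemma blk_start_range: "1 \<le> j \<Longrightarrow> j \<le> n \<Longrightarrow> 1 \<le> blk_start d m j \<and> blk_start d m j \<le> n + d - 1"
  using d1 by (auto simp: blk_start_def)

lemma blk_start_out: "1 \<le> j \<Longrightarrow> j \<noteq> m \<Longrightarrow> blk_start d m j \<notin> {m..m+d-1}"
  using d1 by (auto simp: blk_start_def)

lemma blk_of_start: "1 \<le> j \<Longrightarrow> j \<noteq> m \<Longrightarrow> blk_of d m (blk_start d m j) = j"
  using d1 by (auto simp: blk_start_def blk_of_def)

lemma compl_block: "1 \<le> x \<Longrightarrow> x \<le> n + d - 1 \<Longrightarrow> x \<notin> {m..m+d-1} \<Longrightarrow> 1 \<le> m \<Longrightarrow> m \<le> n \<Longrightarrow>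
  \<exists>j. 1 \<le> j \<and> j \<le> n \<and> j \<noteq> m \<and> x = blk_start d m j"
proof -
  assume a: "1 \<le> x" "x \<le> n + d - 1" "x \<notin> {m..m+d-1}" "1 \<le> m" "m \<le> n"
  show ?thesis
  proof (cases "x < m")
    case True then show ?thesis using a by (intro exI[of _ x]) (auto simp: blk_start_def)
  next
    case False
    then have "x \<ge> m + d" using a by auto
    then show ?thesis using a d1 by (intro exI[of _ "x - d + 1"]) (auto simp: blk_start_def)
  qed
qed

lemma sclone_start: "1 \<le> n \<Longrightarrow> \<sigma> permutes {1..n} \<Longrightarrow> 1 \<le> k \<Longrightarrow> k \<le> n \<Longrightarrow> 1 \<le> j \<Longrightarrow> j \<le> n \<Longrightarrow> j \<noteq> k \<Longrightarrow>
  sclone d n k \<sigma> (blk_start d k j) = blk_start d (\<sigma> k) (\<sigma> j)"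
  using blk_start_range[of j n k] blk_of_start[of j k] by (simp add: sclone_def)

lemma rho_kap_out: "1 \<le> n \<Longrightarrow> 1 \<le> k \<Longrightarrow> k \<le> n \<Longrightarrow> g \<in> carrier (G n) \<Longrightarrow> 1 \<le> j \<Longrightarrow> j \<le> n \<Longrightarrow> j \<noteq> k \<Longrightarrow>
  \<rho> (n+d-1) (\<kappa> n k g) (blk_start d k j) = blk_start d (\<rho> n g k) (\<rho> n g j)"
  using C3[of n k g "blk_start d k j"] blk_start_out[of j k] sclone_start rho_perm by simp

lemma rho_kap_block:
  assumes a: "1 \<le> n" "1 \<le> k" "k \<le> n" "g \<in> carrier (G n)" "i < d"
  shows "\<exists>i'<d. \<rho> (n+d-1) (\<kappa> n k g) (k + i) = \<rho> n g k + i'"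
proof (rule ccontr)
  assume nc: "\<not> ?thesis"
  let ?p = "\<rho> (n+d-1) (\<kappa> n k g)" and ?s = "\<rho> n g"
  have n1: "1 \<le> n + d - 1" using a d1 by simp
  have pp: "?p permutes {1..n+d-1}" using rho_perm[OF n1] kap_closed a by simp
  have sk: "1 \<le> ?s k \<and> ?s k \<le> n" using rho_range a by simp
  have "k + i \<in> {1..n+d-1}" using a by auto
  then have x: "?p (k+i) \<in> {1..n+d-1}" using pp permutes_in_image by metis
  have "?p (k+i) \<notin> {?s k..?s k + d - 1}"
  proof
    assume "?p (k+i) \<in> {?s k..?s k + d - 1}"
    then have "?p (k+i) - ?s k < d" "?p (k+i) = ?s k + (?p (k+i) - ?s k)" using d1 by auto
    then show False using nc by blast
  qed
  then obtain j' where j': "1 \<le> j'" "j' \<le> n" "j' \<noteq> ?s k" "?p (k+i) = blk_start d (?s k) j'"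
    using compl_block[of "?p (k+i)" n "?s k"] x sk by auto
  define j where "j = \<rho> n (inv\<^bsub>G n\<^esub> g) j'"
  interpret group "G n" using grp a by simp
  have gi: "inv\<^bsub>G n\<^esub> g \<in> carrier (G n)" using a by simp
  have jr: "1 \<le> j \<and> j \<le> n" unfolding j_def using rho_range[OF a(1) gi] j' by simp
  have sj: "?s j = j'" unfolding j_def using rho_inv2 a by simp
  have jk: "j \<noteq> k" using sj j' by auto
  have "?p (blk_start d k j) = ?p (k+i)" using rho_kap_out[OF a(1-4)] jr jk sj j' by simp
  then have "blk_start d k j = k + i" using pp permutes_inj by (metis injD)
  then show False using blk_start_out[of j k] jr jk a by auto
qed

lemma rho_kap_block_surj:
  assumes a: "1 \<le> n" "1 \<le> k" "k \<le> n" "g \<in> carrier (G n)" "i' < d"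
  shows "\<exists>i<d. \<rho> (n+d-1) (\<kappa> n k g) (k + i) = \<rho> n g k + i'"
proof -
  let ?p = "\<rho> (n+d-1) (\<kappa> n k g)" and ?s = "\<rho> n g"
  have n1: "1 \<le> n + d - 1" using a d1 by simp
  have pp: "?p permutes {1..n+d-1}" using rho_perm[OF n1] kap_closed a by simp
  have sk: "1 \<le> ?s k \<and> ?s k \<le> n" using rho_range a by simp
  have "?s k + i' \<in> {1..n+d-1}" using a sk by auto
  then obtain x where x: "x \<in> {1..n+d-1}" "?p x = ?s k + i'" using permutes_image[OF pp] by (metis imageE)
  show ?thesis
  proof (cases "x \<in> {k..k+d-1}")
    case True
    then show ?thesis using x d1 by (intro exI[of _ "x - k"]) auto
  next
    case False
    then obtain j where j: "1 \<le> j" "j \<le> n" "j \<noteq> k" "x = blk_start d k j"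
      using compl_block[of x n k] x a by auto
    then have "?p x = blk_start d (?s k) (?s j)" using rho_kap_out a by simp
    moreover have "?s j \<noteq> ?s k" using rho_inj a j by metis
    moreover have "1 \<le> ?s j" using rho_range a j by simp
    ultimately have "?p x \<notin> {?s k..?s k + d - 1}" using blk_start_out by metis
    then show ?thesis using x a by simp
  qed
qed

end


context csys begin

abbreviation vt :: "dtree \<times> 'g \<times> dtree \<Rightarrow> bool" where "vt \<equiv> valid_triple d G"

definition lt :: "dtree \<times> 'g \<times> dtree \<Rightarrow> dtree" where "lt t = fst t"
definition mid :: "dtree \<times> 'g \<times> dtree \<Rightarrow> 'g" where "mid t = fst (snd t)"
definition rt :: "dtree \<times> 'g \<times> dtree \<Rightarrow> dtree" where "rt t = snd (snd t)"

lemma ltmr[simp]: "lt (T,g,U) = T" "mid (T,g,U) = g" "rt (T,g,U) = U"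
  by (simp_all add: lt_def mid_def rt_def)

definition ex :: "dtree \<times> 'g \<times> dtree \<Rightarrow> nat \<Rightarrow> dtree \<times> 'g \<times> dtree" where
  "ex t k = (grow d (\<rho> (leaves (lt t)) (mid t) k) (lt t), \<kappa> (leaves (lt t)) k (mid t), grow d k (rt t))"

lemma ex_simp: "ex (T,g,U) k = (grow d (\<rho> (leaves T) g k) T, \<kappa> (leaves T) k g, grow d k U)"
  by (simp add: ex_def)

lemma vt_def2: "vt (T,g,U) \<longleftrightarrow> dvalid d T \<and> dvalid d U \<and> leaves T = leaves U \<and> g \<in> carrier (G (leaves T))"
  by (simp add: valid_triple_def)

lemma vt_n: "vt t \<Longrightarrow> 1 \<le> leaves (lt t) \<and> leaves (rt t) = leaves (lt t) \<and> dvalid d (lt t) \<and> dvalid d (rt t) \<and> mid t \<in> carrier (G (leaves (lt t)))"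
  using leaves_pos[OF d1] by (cases t) (auto simp: valid_triple_def)

lemma ex_valid: "vt t \<Longrightarrow> 1 \<le> k \<Longrightarrow> k \<le> leaves (rt t) \<Longrightarrow> vt (ex t k) \<and> leaves (lt (ex t k)) = leaves (lt t) + d - 1"
proof -
  assume a: "vt t" "1 \<le> k" "k \<le> leaves (rt t)"
  obtain T g U where t: "t = (T,g,U)" by (cases t)
  let ?n = "leaves T"
  have v: "dvalid d T" "dvalid d U" "leaves T = leaves U" "g \<in> carrier (G ?n)" "1 \<le> ?n"
    using vt_n[OF a(1)] t by auto
  have r: "1 \<le> \<rho> ?n g k \<and> \<rho> ?n g k \<le> ?n" using rho_range v a t by simp
  have "dvalid d (grow d (\<rho> ?n g k) T)" "leaves (grow d (\<rho> ?n g k) T) = ?n + d - 1"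
    using grow_valid grow_leaves v r by auto
  moreover have "dvalid d (grow d k U)" "leaves (grow d k U) = ?n + d - 1"
    using grow_valid grow_leaves v a t by auto
  moreover have "\<kappa> ?n k g \<in> carrier (G (?n + d - 1))" using kap_closed v a t by simp
  ultimately show ?thesis using t by (simp add: ex_simp vt_def2)
qed

lemma expand_rel_eq: "expand_rel d G \<rho> \<kappa> = {(t, ex t k) | t k. vt t \<and> 1 \<le> k \<and> k \<le> leaves (lt t)}"
  unfolding expand_rel_def by (auto simp: ex_simp)

lemma ex_in_rel: "vt t \<Longrightarrow> 1 \<le> k \<Longrightarrow> k \<le> leaves (rt t) \<Longrightarrow> (t, ex t k) \<in> expand_rel d G \<rho> \<kappa>"
  unfolding expand_rel_eq using vt_n by fastforce

lemma ex_diamond: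
  assumes "vt t" "1 \<le> k" "k \<le> leaves (rt t)" "1 \<le> j" "j \<le> leaves (rt t)" "k \<noteq> j"
  shows "ex (ex t k) (blk_start d k j) = ex (ex t j) (blk_start d j k)"
proof -
  obtain T g U where t: "t = (T,g,U)" by (cases t)
  let ?n = "leaves T" and ?s = "\<rho> (leaves T) g"
  have v: "dvalid d T" "dvalid d U" "leaves T = leaves U" "g \<in> carrier (G ?n)" "1 \<le> ?n"
    using vt_n[OF assms(1)] t by auto
  have kr: "1 \<le> k" "k \<le> ?n" "1 \<le> j" "j \<le> ?n" using assms t v by auto
  have sk: "1 \<le> ?s k \<and> ?s k \<le> ?n" "1 \<le> ?s j \<and> ?s j \<le> ?n" using rho_range v kr by auto
  have sjk: "?s k \<noteq> ?s j" using rho_inj v kr assms(6) by metis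
  have lk: "leaves (grow d (?s k) T) = ?n + d - 1" "leaves (grow d (?s j) T) = ?n + d - 1"
    using grow_leaves v sk by auto
  have L: "grow d (\<rho> (?n+d-1) (\<kappa> ?n k g) (blk_start d k j)) (grow d (?s k) T)
      = grow d (\<rho> (?n+d-1) (\<kappa> ?n j g) (blk_start d j k)) (grow d (?s j) T)"
    using rho_kap_out[of ?n k g j] rho_kap_out[of ?n j g k] v kr assms(6)
      grow_diamond[OF d1 v(1), of "?s k" "?s j"] sk sjk by simp
  have M: "\<kappa> (?n+d-1) (blk_start d k j) (\<kappa> ?n k g) = \<kappa> (?n+d-1) (blk_start d j k) (\<kappa> ?n j g)"
  proof (cases "j < k")
    case True
    then show ?thesis using C2[of ?n j k g] v kr by (simp add: blk_start_def)
  next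
    case False
    then have "k < j" using assms(6) by simp
    then show ?thesis using C2[of ?n k j g] v kr by (simp add: blk_start_def)
  qed
  have R: "grow d (blk_start d k j) (grow d k U) = grow d (blk_start d j k) (grow d j U)"
    using grow_diamond[OF d1 v(2), of k j] kr v assms(6) by simp
  show ?thesis using L M R lk t by (simp add: ex_simp)
qed

lemma ex_inj:
  assumes "vt t" "vt s" "rt t = rt s" "1 \<le> k" "k \<le> leaves (rt t)" "ex t k = ex s k"
  shows "t = s"
proof -
  obtain T g U where t: "t = (T,g,U)" by (cases t)
  obtain T' g' U' where s: "s = (T',g',U')" by (cases s)
  have v: "dvalid d T" "dvalid d U" "leaves T = leaves U" "g \<in> carrier (G (leaves T))" "1 \<le> leaves T"
    using vt_n[OF assms(1)] t by auto
  have v': "dvalid d T'" "dvalid d U'" "leaves T' = leaves U'" "g' \<in> carrier (G (leaves T'))"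
    using vt_n[OF assms(2)] s by auto
  have UU: "U = U'" using assms t s by simp
  have n: "leaves T' = leaves T" using v v' UU by simp
  have "\<kappa> (leaves T) k g = \<kappa> (leaves T) k g'" using assms(6) t s n by (simp add: ex_simp)
  then have gg: "g = g'" using kap_inj[of "leaves T" k] v v' n assms t by (auto dest: inj_onD)
  have "grow d (\<rho> (leaves T) g k) T = grow d (\<rho> (leaves T) g k) T'" using assms(6) t s n gg by (simp add: ex_simp)
  moreover have "1 \<le> \<rho> (leaves T) g k \<and> \<rho> (leaves T) g k \<le> leaves T"
    using rho_range[of "leaves T" g k] v assms t by simp
  ultimately have "T = T'" using grow_inj[OF d1 v(1) v'(1)] n by (metis (no_types) order_trans order_refl)
  then show ?thesis using t s UU gg by simp
qed

definition fpos :: "dtree \<Rightarrow> dtree \<Rightarrow> nat" where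
  "fpos V W = (LEAST k. 1 \<le> k \<and> k \<le> leaves V \<and> addrs V ! (k-1) \<notin> set (addrs W))"

lemma fpos: "dvalid d V \<Longrightarrow> dvalid d W \<Longrightarrow> le V W \<Longrightarrow> V \<noteq> W \<Longrightarrow>
   1 \<le> fpos V W \<and> fpos V W \<le> leaves V \<and> addrs V ! (fpos V W - 1) \<notin> set (addrs W)"
  unfolding fpos_def using le_neq_internal[of d V W] by (rule LeastI_ex) simp_all

lemma Exp_term: "vt t \<Longrightarrow> dvalid d W \<Longrightarrow> le (rt t) W \<Longrightarrow> rt t \<noteq> W \<Longrightarrow>
  leaves W - leaves (rt (ex t (fpos (rt t) W))) < leaves W - leaves (rt t)"
proof -
  assume a: "vt t" "dvalid d W" "le (rt t) W" "rt t \<noteq> W"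
  let ?k = "fpos (rt t) W"
  have f: "1 \<le> ?k" "?k \<le> leaves (rt t)" "addrs (rt t) ! (?k - 1) \<notin> set (addrs W)"
    using fpos[of "rt t" W] a vt_n by auto
  have rg: "rt (ex t ?k) = grow d ?k (rt t)" by (simp add: ex_def)
  have vg: "dvalid d (grow d ?k (rt t))" "leaves (grow d ?k (rt t)) = leaves (rt t) + d - 1"
    using grow_valid grow_leaves f vt_n a by auto
  have "le (grow d ?k (rt t)) W" using le_grow_internal f a vt_n by blast
  then have "leaves (grow d ?k (rt t)) \<le> leaves W" using le_leaves[OF d1] vg a by blast
  then show ?thesis using rg vg d2 by simp
qed

function Exp :: "dtree \<times> 'g \<times> dtree \<Rightarrow> dtree \<Rightarrow> dtree \<times> 'g \<times> dtree" where
  "Exp t W = (if vt t \<and> dvalid d W \<and> le (rt t) W \<and> rt t \<noteq> W then Exp (ex t (fpos (rt t) W)) W else t)"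
  by auto
termination
  by (relation "measure (\<lambda>(t,W). leaves W - leaves (rt t))") (auto intro: Exp_term)

declare Exp.simps[simp del]

abbreviation E where "E \<equiv> triple_equiv d G \<rho> \<kappa>"
abbreviation R where "R \<equiv> expand_rel d G \<rho> \<kappa>"

lemma R_sub_E: "(t,s) \<in> R \<Longrightarrow> (t,s) \<in> E"
  unfolding triple_equiv_def by blast

lemma Rstar_sub_E: "(t,s) \<in> R\<^sup>* \<Longrightarrow> (t,s) \<in> E"
  unfolding triple_equiv_def by (meson in_rtrancl_UnI)

lemma Exp_props:
  "vt t \<Longrightarrow> dvalid d W \<Longrightarrow> le (rt t) W \<Longrightarrow>
   vt (Exp t W) \<and> rt (Exp t W) = W \<and> (t, Exp t W) \<in> R\<^sup>* \<and> le (lt t) (lt (Exp t W))"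
proof (induction t W rule: Exp.induct)
  case (1 t W)
  show ?case
  proof (cases "rt t = W")
    case True
    then show ?thesis using 1 Exp.simps[of t W] by (simp add: le_refl)
  next
    case False
    let ?k = "fpos (rt t) W"
    have f: "1 \<le> ?k" "?k \<le> leaves (rt t)" "addrs (rt t) ! (?k - 1) \<notin> set (addrs W)"
      using fpos[of "rt t" W] 1 False vt_n by auto
    have e: "Exp t W = Exp (ex t ?k) W" using Exp.simps[of t W] 1 False by simp
    have ve: "vt (ex t ?k)" using ex_valid 1 f by blast
    have "le (grow d ?k (rt t)) W" using le_grow_internal f 1 vt_n by blast
    then have le2: "le (rt (ex t ?k)) W" by (simp add: ex_def)
    have IH: "vt (Exp (ex t ?k) W) \<and> rt (Exp (ex t ?k) W) = W \<and> (ex t ?k, Exp (ex t ?k) W) \<in> R\<^sup>* \<and> le (lt (ex t ?k)) (lt (Exp (ex t ?k) W))"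
      using 1 False ve le2 by blast
    have "(t, ex t ?k) \<in> R" using ex_in_rel 1 f by blast
    moreover have "le (lt t) (lt (ex t ?k))"
    proof -
      have "1 \<le> \<rho> (leaves (lt t)) (mid t) ?k \<and> \<rho> (leaves (lt t)) (mid t) ?k \<le> leaves (lt t)"
        using rho_range vt_n[OF 1(2)] f by auto
      then show ?thesis using le_grow vt_n[OF 1(2)] by (simp add: ex_def)
    qed
    ultimately have "(t, Exp t W) \<in> R\<^sup>*" "le (lt t) (lt (Exp t W))"
      using IH e le_trans by (auto intro: converse_rtrancl_into_rtrancl)
    then show ?thesis using IH e by simp
  qed
qed

lemma Exp_path:
  assumes "vt t" "dvalid d W" "1 \<le> k" "k \<le> leaves (rt t)" "le (grow d k (rt t)) W"
  shows "Exp (ex t k) W = Exp t W"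
  using assms
proof (induction "leaves W - leaves (rt t)" arbitrary: t k rule: less_induct)
  case less
  let ?V = "rt t"
  have vV: "dvalid d ?V" using vt_n less.prems by blast
  have leV: "le ?V W" using le_trans[OF le_grow[OF vV less.prems(3,4)] less.prems(5)] .
  have neq: "?V \<noteq> W"
  proof
    assume "?V = W"
    then have "leaves (grow d k ?V) \<le> leaves ?V" using le_leaves[OF d1] grow_valid vV less.prems by metis
    then show False using grow_leaves vV less.prems d2 by simp
  qed
  let ?k0 = "fpos ?V W"
  have f: "1 \<le> ?k0" "?k0 \<le> leaves ?V" "addrs ?V ! (?k0 - 1) \<notin> set (addrs W)"
    using fpos[of ?V W] vV less.prems leV neq by auto
  have e: "Exp t W = Exp (ex t ?k0) W" using Exp.simps[of t W] less.prems leV neq by simp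
  show ?case
  proof (cases "k = ?k0")
    case True then show ?thesis using e by simp
  next
    case False
    let ?k' = "blk_start d ?k0 k" and ?k0' = "blk_start d k ?k0"
    have vk0: "vt (ex t ?k0)" and vk: "vt (ex t k)" using ex_valid less.prems f by auto
    have rk0: "rt (ex t ?k0) = grow d ?k0 ?V" and rk: "rt (ex t k) = grow d k ?V" by (simp_all add: ex_def)
    have lg0: "leaves (grow d ?k0 ?V) = leaves ?V + d - 1" and lg: "leaves (grow d k ?V) = leaves ?V + d - 1"
      using grow_leaves vV f less.prems by auto
    have vg0: "dvalid d (grow d ?k0 ?V)" and vg: "dvalid d (grow d k ?V)" using grow_valid vV f less.prems by auto
    have le0: "le (grow d ?k0 ?V) W" using le_grow_internal vV less.prems(2) leV f by blast
    (* the old leaf k lies at position k' in grow k0 V and is internal in W *)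
    have kint: "addrs ?V ! (k - 1) \<notin> set (addrs W)"
    proof
      assume "addrs ?V ! (k - 1) \<in> set (addrs W)"
      then obtain v c where vc: "v \<in> set (addrs (grow d k ?V))" "addrs ?V ! (k-1) = v @ c"
        using less.prems(5) unfolding le_def by blast
      have kin: "addrs ?V ! (k-1) \<in> set (addrs ?V)" using less.prems by (simp add: len_addrs)
      from vc(1) consider "v \<in> set (addrs ?V) - {addrs ?V ! (k-1)}" | "v \<in> set (blockl d (addrs ?V ! (k - 1)))"
        using set_grow_addrs[OF vV less.prems(3,4)] by blast
      then show False
      proof cases
        case 1
        then have "v = addrs ?V ! (k-1)" using leaf_prefix_unique[of v ?V "addrs ?V ! (k-1)" "addrs ?V ! (k-1)" c "[]"] kin vc by auto
        then show False using 1 by simp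
      next
        case 2
        then show False using vc by (auto simp: blockl_def)
      qed
    qed
    have k'r: "1 \<le> ?k' \<and> ?k' \<le> leaves (grow d ?k0 ?V)" using blk_start_range[of k "leaves ?V" ?k0] less.prems lg0 by simp
    have k0'r: "1 \<le> ?k0' \<and> ?k0' \<le> leaves (grow d k ?V)" using blk_start_range[of ?k0 "leaves ?V" k] f lg by simp
    have a1: "addrs (grow d ?k0 ?V) ! (?k' - 1) = addrs ?V ! (k-1)"
      using addr_grow_shift vV f less.prems False by simp
    have a2: "addrs (grow d k ?V) ! (?k0' - 1) = addrs ?V ! (?k0-1)"
      using addr_grow_shift vV f less.prems False by simp
    have le1: "le (grow d ?k' (grow d ?k0 ?V)) W"
      using le_grow_internal[OF vg0 less.prems(2) le0] k'r a1 kint by simp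
    have le2: "le (grow d ?k0' (grow d k ?V)) W"
      using le_grow_internal[OF vg less.prems(2) less.prems(5)] k0'r a2 f by simp
    have m0: "leaves W - leaves (rt (ex t ?k0)) < leaves W - leaves (rt t)"
      using Exp_term less.prems leV neq by blast
    have m1: "leaves W - leaves (rt (ex t k)) < leaves W - leaves (rt t)"
    proof -
      have "leaves (grow d k ?V) \<le> leaves W" using le_leaves[OF d1 vg less.prems(2) less.prems(5)] .
      then show ?thesis using rk lg d2 by simp
    qed
    have "Exp (ex (ex t ?k0) ?k') W = Exp (ex t ?k0) W"
      using less.hyps[OF m0 vk0 less.prems(2)] k'r rk0 le1 by simp
    moreover have "Exp (ex (ex t k) ?k0') W = Exp (ex t k) W"
      using less.hyps[OF m1 vk less.prems(2)] k0'r rk le2 by simp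
    moreover have "ex (ex t ?k0) ?k' = ex (ex t k) ?k0'"
      using ex_diamond less.prems f False by metis
    ultimately show ?thesis using e by simp
  qed
qed

end


context csys begin

lemma E_refl: "(t,t) \<in> E" unfolding triple_equiv_def by simp

lemma E_sym: "(t,s) \<in> E \<Longrightarrow> (s,t) \<in> E"
proof -
  assume "(t,s) \<in> E"
  then have "(s,t) \<in> ((R \<union> R\<inverse>)\<inverse>)\<^sup>*" unfolding triple_equiv_def by (simp add: rtrancl_converseI)
  moreover have "(R \<union> R\<inverse>)\<inverse> = R \<union> R\<inverse>" by auto
  ultimately show ?thesis unfolding triple_equiv_def by simp
qed

lemma E_trans: "(t,s) \<in> E \<Longrightarrow> (s,u) \<in> E \<Longrightarrow> (t,u) \<in> E"
  unfolding triple_equiv_def by (rule rtrancl_trans)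

abbreviation cls where "cls \<equiv> tclass d G \<rho> \<kappa>"

lemma cls_eq_iff: "cls t = cls s \<longleftrightarrow> (t,s) \<in> E"
proof
  assume "cls t = cls s"
  then have "s \<in> cls t" using E_refl unfolding tclass_def by auto
  then show "(t,s) \<in> E" unfolding tclass_def by auto
next
  assume a: "(t,s) \<in> E"
  show "cls t = cls s" unfolding tclass_def using a E_sym E_trans by blast
qed

lemma R_valid: "(t,s) \<in> R \<Longrightarrow> vt t \<and> vt s"
  unfolding expand_rel_eq using ex_valid vt_n by fastforce

lemma E_valid: "(t,s) \<in> E \<Longrightarrow> vt t \<Longrightarrow> vt s"
  unfolding triple_equiv_def
proof (induction rule: rtrancl_induct)
  case base then show ?case by simp
next
  case (step u s) then show ?case using R_valid by blast
qed

lemma E_Exp: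
  assumes "(t,s) \<in> E" "vt t"
  shows "\<exists>W0. dvalid d W0 \<and> le (rt t) W0 \<and> le (rt s) W0 \<and> (\<forall>W. dvalid d W \<and> le W0 W \<longrightarrow> Exp t W = Exp s W)"
  using assms unfolding triple_equiv_def
proof (induction rule: rtrancl_induct)
  case base
  have "dvalid d (rt t)" using vt_n base by blast
  then show ?case using le_refl by blast
next
  case (step u s)
  from step.IH step.prems obtain W0 where W0: "dvalid d W0" "le (rt t) W0" "le (rt u) W0" "\<forall>W. dvalid d W \<and> le W0 W \<longrightarrow> Exp t W = Exp u W"
    by blast
  have vu: "vt u" using E_valid step(1) step.prems unfolding triple_equiv_def by blast
  from step(2) show ?case
  proof
    assume "(u,s) \<in> R"
    then obtain k where k: "s = ex u k" "1 \<le> k" "k \<le> leaves (lt u)" unfolding expand_rel_eq by blast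
    have k2: "k \<le> leaves (rt u)" using k vt_n[OF vu] by simp
    have rs: "rt s = grow d k (rt u)" using k by (simp add: ex_def)
    have vs: "vt s" using ex_valid[OF vu k(2) k2] k by simp
    have vrs: "dvalid d (rt s)" using vt_n[OF vs] by blast
    let ?W0 = "join W0 (rt s)"
    have v0: "dvalid d ?W0" using join_valid W0(1) vrs by blast
    have l1: "le W0 ?W0" "le (rt s) ?W0" using join_le1[OF W0(1) vrs] join_le2[OF W0(1) vrs] by auto
    have "Exp t W = Exp s W" if "dvalid d W" "le ?W0 W" for W
    proof -
      have "le W0 W" using le_trans[OF l1(1) that(2)] .
      then have "Exp t W = Exp u W" using W0(4) that(1) by blast
      also have "\<dots> = Exp s W" using Exp_path[OF vu that(1) k(2) k2] rs le_trans[OF l1(2) that(2)] k(1) by simp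
      finally show ?thesis .
    qed
    moreover have "le (rt t) ?W0" using le_trans[OF W0(2) l1(1)] .
    ultimately show ?thesis using v0 l1(2) by blast
  next
    assume "(u,s) \<in> R\<inverse>"
    then obtain k where k: "u = ex s k" "1 \<le> k" "k \<le> leaves (lt s)" "vt s" unfolding expand_rel_eq by blast
    have k2: "k \<le> leaves (rt s)" using k vt_n[OF k(4)] by simp
    have ru: "rt u = grow d k (rt s)" using k by (simp add: ex_def)
    have "le (rt s) (rt u)" using le_grow[of d "rt s" k] vt_n[OF k(4)] k(2) k2 ru by simp
    then have l: "le (rt s) W0" using W0(3) le_trans by blast
    have "Exp t W = Exp s W" if "dvalid d W" "le W0 W" for W
    proof -
      have "Exp t W = Exp u W" using W0(4) that by blast
      also have "\<dots> = Exp s W" using Exp_path[OF k(4) that(1) k(2) k2] k(1) ru le_trans[OF W0(3) that(2)] by simp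
      finally show ?thesis .
    qed
    then show ?thesis using l W0(1,2) by blast
  qed
qed

lemma Exp_stop: "rt t = W \<Longrightarrow> Exp t W = t"
  using Exp.simps[of t W] by simp

lemma Exp_step: "vt t \<Longrightarrow> dvalid d W \<Longrightarrow> le (rt t) W \<Longrightarrow> rt t \<noteq> W \<Longrightarrow> Exp t W = Exp (ex t (fpos (rt t) W)) W"
  using Exp.simps[of t W] by simp

lemma Exp_inj:
  "vt t \<Longrightarrow> vt s \<Longrightarrow> rt t = rt s \<Longrightarrow> dvalid d W \<Longrightarrow> le (rt t) W \<Longrightarrow> Exp t W = Exp s W \<Longrightarrow> t = s"
proof (induction t W arbitrary: s rule: Exp.induct)
  case (1 t W)
  show ?case
  proof (cases "rt t = W")
    case True
    then show ?thesis using 1(7) Exp_stop[of t W] Exp_stop[of s W] 1(4) by simp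
  next
    case False
    let ?k = "fpos (rt t) W"
    have f: "1 \<le> ?k" "?k \<le> leaves (rt t)" "addrs (rt t) ! (?k - 1) \<notin> set (addrs W)"
      using fpos[of "rt t" W] 1 False vt_n by auto
    have et: "Exp t W = Exp (ex t ?k) W" using Exp_step 1 False by blast
    have es: "Exp s W = Exp (ex s ?k) W" using Exp_step[of s W] 1 False by simp
    have ve: "vt (ex t ?k)" "vt (ex s ?k)" using ex_valid 1 f by auto
    have "le (grow d ?k (rt t)) W" using le_grow_internal f 1 vt_n by blast
    then have le2: "le (rt (ex t ?k)) W" by (simp add: ex_def)
    have rr: "rt (ex t ?k) = rt (ex s ?k)" using 1 by (simp add: ex_def)
    have ee: "Exp (ex t ?k) W = Exp (ex s ?k) W" using et es 1(7) by simp
    have c: "vt t \<and> dvalid d W \<and> le (rt t) W \<and> rt t \<noteq> W" using 1 False by blast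
    have "ex t ?k = ex s ?k" using 1(1)[OF c ve(1) ve(2) rr 1(5) le2 ee] .
    then show ?thesis using ex_inj 1 f by blast
  qed
qed

lemma uniq_rt: "vt t \<Longrightarrow> vt s \<Longrightarrow> (t,s) \<in> E \<Longrightarrow> rt t = rt s \<Longrightarrow> t = s"
proof -
  assume a: "vt t" "vt s" "(t,s) \<in> E" "rt t = rt s"
  obtain W0 where W0: "dvalid d W0" "le (rt t) W0" "\<forall>W. dvalid d W \<and> le W0 W \<longrightarrow> Exp t W = Exp s W"
    using E_Exp a by blast
  then show ?thesis using Exp_inj[of t s W0] a le_refl by blast
qed

lemma Exp_E: "vt t \<Longrightarrow> dvalid d W \<Longrightarrow> le (rt t) W \<Longrightarrow> (t, Exp t W) \<in> E"
  using Exp_props Rstar_sub_E by blast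

definition tinv :: "dtree \<times> 'g \<times> dtree \<Rightarrow> dtree \<times> 'g \<times> dtree" where
  "tinv t = (rt t, inv\<^bsub>G (leaves (lt t))\<^esub> (mid t), lt t)"

lemma tinv_simp: "tinv (T,g,U) = (U, inv\<^bsub>G (leaves T)\<^esub> g, T)" by (simp add: tinv_def)

lemma tinv_valid: "vt t \<Longrightarrow> vt (tinv t)"
proof -
  assume a: "vt t"
  obtain T g U where t: "t = (T,g,U)" by (cases t)
  have v: "dvalid d T" "dvalid d U" "leaves T = leaves U" "g \<in> carrier (G (leaves T))" "1 \<le> leaves T"
    using vt_n[OF a] t by auto
  interpret group "G (leaves T)" using grp v by simp
  have "inv\<^bsub>G (leaves T)\<^esub> g \<in> carrier (G (leaves T))" using v(4) by simp
  then show ?thesis using v(1,2) t v(3)[symmetric] by (simp add: tinv_simp vt_def2)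
qed

lemma tinv_tinv: "vt t \<Longrightarrow> tinv (tinv t) = t"
proof -
  assume a: "vt t"
  obtain T g U where t: "t = (T,g,U)" by (cases t)
  have v: "dvalid d T" "dvalid d U" "leaves T = leaves U" "g \<in> carrier (G (leaves T))" "1 \<le> leaves T"
    using vt_n[OF a] t by auto
  interpret group "G (leaves T)" using grp v by simp
  have "inv\<^bsub>G (leaves T)\<^esub> (inv\<^bsub>G (leaves T)\<^esub> g) = g" using v(4) by simp
  then show ?thesis using t v(3)[symmetric] by (simp add: tinv_simp)
qed

lemma tinv_ex: "vt t \<Longrightarrow> 1 \<le> k \<Longrightarrow> k \<le> leaves (rt t) \<Longrightarrow>
  tinv (ex t k) = ex (tinv t) (\<rho> (leaves (lt t)) (mid t) k)"
proof -
  assume a: "vt t" "1 \<le> k" "k \<le> leaves (rt t)"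
  obtain T g U where t: "t = (T,g,U)" by (cases t)
  let ?n = "leaves T"
  have v: "dvalid d T" "dvalid d U" "leaves T = leaves U" "g \<in> carrier (G ?n)" "1 \<le> ?n"
    using vt_n[OF a(1)] t by auto
  have r: "1 \<le> \<rho> ?n g k \<and> \<rho> ?n g k \<le> ?n" using rho_range v a t by simp
  have lg: "leaves (grow d (\<rho> ?n g k) T) = ?n + d - 1" using grow_leaves v r by simp
  show ?thesis using t v a r lg rho_inv kap_inv by (simp add: ex_simp tinv_simp)
qed

lemma tinv_R: "(t,s) \<in> R \<Longrightarrow> (tinv t, tinv s) \<in> R"
proof -
  assume "(t,s) \<in> R"
  then obtain k where k: "s = ex t k" "vt t" "1 \<le> k" "k \<le> leaves (lt t)" unfolding expand_rel_eq by blast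
  have "tinv s = ex (tinv t) (\<rho> (leaves (lt t)) (mid t) k)" using tinv_ex k vt_n by simp
  moreover have "vt (tinv t)" using tinv_valid k by blast
  moreover have "1 \<le> \<rho> (leaves (lt t)) (mid t) k \<and> \<rho> (leaves (lt t)) (mid t) k \<le> leaves (lt (tinv t))"
    using rho_range vt_n[OF k(2)] k by (auto simp: tinv_def)
  ultimately show ?thesis unfolding expand_rel_eq by blast
qed

lemma tinv_E: "(t,s) \<in> E \<Longrightarrow> (tinv t, tinv s) \<in> E"
  unfolding triple_equiv_def
proof (induction rule: rtrancl_induct)
  case base then show ?case by simp
next
  case (step u s)
  then have "(tinv u, tinv s) \<in> R \<union> R\<inverse>" using tinv_R by blast
  then show ?case using step by (meson rtrancl.rtrancl_into_rtrancl)
qed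

lemma uniq_lt: "vt t \<Longrightarrow> vt s \<Longrightarrow> (t,s) \<in> E \<Longrightarrow> lt t = lt s \<Longrightarrow> t = s"
proof -
  assume a: "vt t" "vt s" "(t,s) \<in> E" "lt t = lt s"
  have "tinv t = tinv s" using uniq_rt[OF tinv_valid[OF a(1)] tinv_valid[OF a(2)] tinv_E[OF a(3)]] a(4)
    by (simp add: tinv_def)
  then show ?thesis using tinv_tinv a by metis
qed

definition LExp where "LExp s W = tinv (Exp (tinv s) W)"

lemma LExp_props: "vt s \<Longrightarrow> dvalid d W \<Longrightarrow> le (lt s) W \<Longrightarrow> vt (LExp s W) \<and> lt (LExp s W) = W \<and> (s, LExp s W) \<in> E"
proof -
  assume a: "vt s" "dvalid d W" "le (lt s) W"
  have vi: "vt (tinv s)" using tinv_valid a by blast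
  have r: "rt (tinv s) = lt s" by (simp add: tinv_def)
  have P: "vt (Exp (tinv s) W) \<and> rt (Exp (tinv s) W) = W \<and> (tinv s, Exp (tinv s) W) \<in> E"
    using Exp_props[OF vi a(2)] a r Rstar_sub_E by auto
  then have "(tinv (tinv s), LExp s W) \<in> E" unfolding LExp_def using tinv_E by blast
  then have "(s, LExp s W) \<in> E" using tinv_tinv a by simp
  moreover have "vt (LExp s W)" unfolding LExp_def using P tinv_valid by blast
  moreover have "lt (LExp s W) = W" unfolding LExp_def using P by (simp add: tinv_def lt_def rt_def)
  ultimately show ?thesis by blast
qed

end


context csys begin

definition tprod :: "dtree \<times> 'g \<times> dtree \<Rightarrow> dtree \<times> 'g \<times> dtree \<Rightarrow> dtree \<times> 'g \<times> dtree" where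
  "tprod t s = (lt t, mid t \<otimes>\<^bsub>G (leaves (lt t))\<^esub> mid s, rt s)"

lemma tprod_simp: "tprod (T,g,U) (U',h,W) = (T, g \<otimes>\<^bsub>G (leaves T)\<^esub> h, W)" by (simp add: tprod_def)

lemma tprod_valid: "vt t \<Longrightarrow> vt s \<Longrightarrow> rt t = lt s \<Longrightarrow> vt (tprod t s)"
proof -
  assume a: "vt t" "vt s" "rt t = lt s"
  obtain T g U where t: "t = (T,g,U)" by (cases t)
  obtain U' h W where s: "s = (U',h,W)" by (cases s)
  have v: "dvalid d T" "dvalid d U" "leaves T = leaves U" "g \<in> carrier (G (leaves T))" "1 \<le> leaves T"
    using vt_n[OF a(1)] t by auto
  have v': "dvalid d W" "leaves U' = leaves W" "h \<in> carrier (G (leaves U'))" "U' = U"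
    using vt_n[OF a(2)] s a(3) t by auto
  interpret group "G (leaves T)" using grp v by simp
  have "leaves U' = leaves T" using v'(4) v(3) by simp
  then have "h \<in> carrier (G (leaves T))" using v'(3) by simp
  then have c: "g \<otimes>\<^bsub>G (leaves T)\<^esub> h \<in> carrier (G (leaves T))" using v(4) by (rule m_closed[rotated])
  have lw: "leaves T = leaves W" using v'(2,4) v(3) by simp
  have "tprod t s = (T, g \<otimes>\<^bsub>G (leaves T)\<^esub> h, W)" using t s by (simp add: tprod_simp)
  moreover have "vt (T, g \<otimes>\<^bsub>G (leaves T)\<^esub> h, W)" unfolding vt_def2 using v(1) v'(1) lw c by blast
  ultimately show ?thesis by simp
qed

lemma tprod_ex:
  assumes "vt t" "vt s" "rt t = lt s" "1 \<le> k" "k \<le> leaves (rt t)"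
  defines "m \<equiv> \<rho> (leaves (lt t)) (inv\<^bsub>G (leaves (lt t))\<^esub> (mid s)) k"
  shows "1 \<le> m \<and> m \<le> leaves (rt s) \<and> lt (ex s m) = rt (ex t k) \<and> tprod (ex t k) (ex s m) = ex (tprod t s) m"
proof -
  obtain T g U where t: "t = (T,g,U)" by (cases t)
  obtain U' h W where s: "s = (U',h,W)" by (cases s)
  let ?n = "leaves T"
  have v: "dvalid d T" "dvalid d U" "leaves T = leaves U" "g \<in> carrier (G ?n)" "1 \<le> ?n"
    using vt_n[OF assms(1)] t by auto
  have v': "dvalid d W" "leaves U' = leaves W" "h \<in> carrier (G ?n)" "U' = U"
    using vt_n[OF assms(2)] s assms(3) t v by auto
  interpret group "G ?n" using grp v by simp
  have kr: "1 \<le> k" "k \<le> ?n" using assms t v by auto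
  have hi: "inv\<^bsub>G ?n\<^esub> h \<in> carrier (G ?n)" using v' by simp
  have mr: "1 \<le> m \<and> m \<le> ?n" unfolding m_def using rho_range[OF v(5) hi kr] t s by simp
  have hm: "\<rho> ?n h m = k" unfolding m_def using rho_inv2[OF v(5) v'(3)] t s by simp
  have gr: "1 \<le> \<rho> ?n g k \<and> \<rho> ?n g k \<le> ?n" using rho_range v kr by simp
  have lg: "leaves (grow d (\<rho> ?n g k) T) = ?n + d - 1" using grow_leaves v gr by simp
  have c1: "\<kappa> ?n m (g \<otimes>\<^bsub>G ?n\<^esub> h) = \<kappa> ?n k g \<otimes>\<^bsub>G (?n + d - 1)\<^esub> \<kappa> ?n m h"
    using C1[of ?n m g h] v v' mr hm by simp
  have r1: "\<rho> ?n (g \<otimes>\<^bsub>G ?n\<^esub> h) m = \<rho> ?n g k" using rho_mult[OF v(5) v(4) v'(3)] hm by simp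
  have "lt (ex s m) = rt (ex t k)" using s t v' v hm by (simp add: ex_simp)
  moreover have "tprod (ex t k) (ex s m) = ex (tprod t s) m"
    using s t v' v hm c1 r1 lg by (simp add: ex_simp tprod_simp)
  ultimately show ?thesis using mr v v' s t by simp
qed

lemma Pstar:
  "vt t \<Longrightarrow> vt s \<Longrightarrow> rt t = lt s \<Longrightarrow> dvalid d W \<Longrightarrow> le (rt t) W \<Longrightarrow>
   \<exists>s'. (s,s') \<in> E \<and> vt s' \<and> lt s' = W \<and> (tprod t s, tprod (Exp t W) s') \<in> E"
proof (induction t W arbitrary: s rule: Exp.induct)
  case (1 t W)
  show ?case
  proof (cases "rt t = W")
    case True
    have "Exp t W = t" using Exp_stop True by blast
    then have "(s,s) \<in> E \<and> vt s \<and> lt s = W \<and> (tprod t s, tprod (Exp t W) s) \<in> E"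
      using 1(2-4) True E_refl by simp
    then show ?thesis by blast
  next
    case False
    let ?k = "fpos (rt t) W"
    have f: "1 \<le> ?k" "?k \<le> leaves (rt t)" "addrs (rt t) ! (?k - 1) \<notin> set (addrs W)"
      using fpos[of "rt t" W] 1 False vt_n by auto
    have et: "Exp t W = Exp (ex t ?k) W" using Exp_step 1 False by blast
    have ve: "vt (ex t ?k)" using ex_valid 1 f by auto
    have "le (grow d ?k (rt t)) W" using le_grow_internal f 1 vt_n by blast
    then have le2: "le (rt (ex t ?k)) W" by (simp add: ex_def)
    let ?m = "\<rho> (leaves (lt t)) (inv\<^bsub>G (leaves (lt t))\<^esub> (mid s)) ?k"
    have P: "1 \<le> ?m \<and> ?m \<le> leaves (rt s) \<and> lt (ex s ?m) = rt (ex t ?k) \<and> tprod (ex t ?k) (ex s ?m) = ex (tprod t s) ?m"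
      using tprod_ex[of t s ?k] 1 f by blast
    have vs: "vt (ex s ?m)" using ex_valid 1 P by blast
    have c: "vt t \<and> dvalid d W \<and> le (rt t) W \<and> rt t \<noteq> W" using 1 False by blast
    obtain s' where s': "(ex s ?m, s') \<in> E" "vt s'" "lt s' = W" "(tprod (ex t ?k) (ex s ?m), tprod (Exp (ex t ?k) W) s') \<in> E"
      using 1(1)[OF c ve vs] P 1(5) le2 by metis
    have "(s, ex s ?m) \<in> E" using ex_in_rel 1 P R_sub_E by blast
    moreover have "(tprod t s, tprod (ex t ?k) (ex s ?m)) \<in> E"
    proof -
      have vp: "vt (tprod t s)" using tprod_valid 1 by blast
      have "leaves (rt (tprod t s)) = leaves (rt s)" by (simp add: tprod_def)
      then have "(tprod t s, ex (tprod t s) ?m) \<in> R" using ex_in_rel[OF vp] P by simp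
      then show ?thesis using P R_sub_E by simp
    qed
    ultimately show ?thesis using s' et E_trans by metis
  qed
qed

lemma tprod_wd:
  assumes "vt t1" "vt s1" "vt t2" "vt s2" "rt t1 = lt s1" "rt t2 = lt s2" "(t1,t2) \<in> E" "(s1,s2) \<in> E"
  shows "(tprod t1 s1, tprod t2 s2) \<in> E"
proof -
  obtain W0 where W0: "dvalid d W0" "le (rt t1) W0" "le (rt t2) W0" "\<forall>W. dvalid d W \<and> le W0 W \<longrightarrow> Exp t1 W = Exp t2 W"
    using E_Exp assms by blast
  have ee: "Exp t1 W0 = Exp t2 W0" using W0 le_refl by blast
  obtain s1' where s1': "(s1,s1') \<in> E" "vt s1'" "lt s1' = W0" "(tprod t1 s1, tprod (Exp t1 W0) s1') \<in> E"
    using Pstar[OF assms(1,2,5) W0(1,2)] by blast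
  obtain s2' where s2': "(s2,s2') \<in> E" "vt s2'" "lt s2' = W0" "(tprod t2 s2, tprod (Exp t2 W0) s2') \<in> E"
    using Pstar[OF assms(3,4,6) W0(1,3)] by blast
  have "(s1', s1) \<in> E" using s1'(1) E_sym by blast
  then have "(s1', s2) \<in> E" using assms(8) E_trans by blast
  then have "(s1', s2') \<in> E" using s2'(1) E_trans by blast
  then have eq: "s1' = s2'" using uniq_lt[OF s1'(2) s2'(2)] s1'(3) s2'(3) by simp
  have "(tprod (Exp t2 W0) s2', tprod t2 s2) \<in> E" using s2'(4) E_sym by blast
  then have "(tprod (Exp t1 W0) s1', tprod t2 s2) \<in> E" using eq ee by simp
  then show ?thesis using s1'(4) E_trans by blast
qed

abbreviation TGG where "TGG \<equiv> TG d G \<rho> \<kappa>"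

lemma tmult_cls:
  assumes "vt t" "vt s" "rt t = lt s"
  shows "tmult d G \<rho> \<kappa> (cls t) (cls s) = cls (tprod t s)"
proof -
  define P where "P = (\<lambda>(T, g, U, h, W). vt (T, g, U) \<and> vt (U, h, W) \<and>
           cls t = cls (T, g, U) \<and> cls s = cls (U, h, W))"
  have ex: "\<exists>x. P x"
  proof -
    obtain T g U where t: "t = (T,g,U)" by (cases t)
    obtain U' h W where s: "s = (U',h,W)" by (cases s)
    have "P (T, g, U, h, W)" using assms t s unfolding P_def by simp
    then show ?thesis by blast
  qed
  obtain T0 g0 U0 h0 W0 where x0: "(SOME x. P x) = (T0, g0, U0, h0, W0)" by (metis prod_cases5)
  have P0: "P (T0, g0, U0, h0, W0)" using someI_ex[OF ex] x0 by simp
  have "tmult d G \<rho> \<kappa> (cls t) (cls s) = cls (T0, g0 \<otimes>\<^bsub>G (leaves T0)\<^esub> h0, W0)"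
    unfolding tmult_def using x0 unfolding P_def by simp
  also have "\<dots> = cls (tprod (T0,g0,U0) (U0,h0,W0))" by (simp add: tprod_simp)
  also have "\<dots> = cls (tprod t s)"
  proof -
    have "vt (T0,g0,U0)" "vt (U0,h0,W0)" "(t, (T0,g0,U0)) \<in> E" "(s, (U0,h0,W0)) \<in> E"
      using P0 cls_eq_iff unfolding P_def by auto
    then show ?thesis using tprod_wd[of "(T0,g0,U0)" "(U0,h0,W0)" t s] assms cls_eq_iff E_sym by simp
  qed
  finally show ?thesis .
qed

lemma TG_carrier: "carrier TGG = {cls x | x. vt x}" by (simp add: TG_def)
lemma TG_mult: "x \<otimes>\<^bsub>TGG\<^esub> y = tmult d G \<rho> \<kappa> x y" by (simp add: TG_def)
lemma TG_one: "\<one>\<^bsub>TGG\<^esub> = cls (Leaf, \<one>\<^bsub>G 1\<^esub>, Leaf)" by (simp add: TG_def)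

lemma cls_carrier: "vt t \<Longrightarrow> cls t \<in> carrier TGG"
  using TG_carrier by blast

lemma mult_cls: "vt t \<Longrightarrow> vt s \<Longrightarrow> rt t = lt s \<Longrightarrow> cls t \<otimes>\<^bsub>TGG\<^esub> cls s = cls (tprod t s)"
  using tmult_cls TG_mult by simp

lemma align: "vt t \<Longrightarrow> vt s \<Longrightarrow> \<exists>t' s'. vt t' \<and> vt s' \<and> (t,t') \<in> E \<and> (s,s') \<in> E \<and> rt t' = lt s'"
proof -
  assume a: "vt t" "vt s"
  let ?J = "join (rt t) (lt s)"
  have v1: "dvalid d (rt t)" "dvalid d (lt s)" using vt_n a by auto
  have vJ: "dvalid d ?J" "le (rt t) ?J" "le (lt s) ?J"
    using join_valid[OF v1] join_le1[OF v1] join_le2[OF v1] by auto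
  have P1: "vt (Exp t ?J) \<and> rt (Exp t ?J) = ?J \<and> (t, Exp t ?J) \<in> E"
    using Exp_props[OF a(1) vJ(1,2)] Exp_E[OF a(1) vJ(1,2)] by blast
  have P2: "vt (LExp s ?J) \<and> lt (LExp s ?J) = ?J \<and> (s, LExp s ?J) \<in> E"
    using LExp_props[OF a(2) vJ(1,3)] by blast
  show ?thesis by (rule exI[of _ "Exp t ?J"], rule exI[of _ "LExp s ?J"]) (use P1 P2 in simp)
qed

lemma vt_unit: "vt (Leaf, \<one>\<^bsub>G 1\<^esub>, Leaf)"
proof -
  interpret group "G 1" using grp[of 1] by simp
  have "\<one>\<^bsub>G 1\<^esub> \<in> carrier (G 1)" by (rule one_closed)
  then show ?thesis unfolding vt_def2 by simp
qed

lemma Exp_one: "dvalid d S \<Longrightarrow> dvalid d W \<Longrightarrow> le S W \<Longrightarrow> Exp (S, \<one>\<^bsub>G (leaves S)\<^esub>, S) W = (W, \<one>\<^bsub>G (leaves W)\<^esub>, W)"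
proof (induction "(S, \<one>\<^bsub>G (leaves S)\<^esub>, S)" W arbitrary: S rule: Exp.induct)
  case (1 W S)
  have vS: "vt (S, \<one>\<^bsub>G (leaves S)\<^esub>, S)"
  proof -
    have "1 \<le> leaves S" using leaves_pos[OF d1] 1 by blast
    then interpret group "G (leaves S)" using grp by simp
    show ?thesis using 1 by (simp add: vt_def2)
  qed
  show ?case
  proof (cases "S = W")
    case True then show ?thesis using Exp_stop[of "(S, \<one>\<^bsub>G (leaves S)\<^esub>, S)" W] by simp
  next
    case False
    let ?k = "fpos S W"
    have f: "1 \<le> ?k" "?k \<le> leaves S" "addrs S ! (?k - 1) \<notin> set (addrs W)"
      using fpos[of S W] 1 False by auto
    have n: "1 \<le> leaves S" using leaves_pos[OF d1] 1 by blast
    have e: "Exp (S, \<one>\<^bsub>G (leaves S)\<^esub>, S) W = Exp (ex (S, \<one>\<^bsub>G (leaves S)\<^esub>, S) ?k) W"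
      using Exp_step[of "(S, \<one>\<^bsub>G (leaves S)\<^esub>, S)" W] vS 1 False by simp
    have ex1: "ex (S, \<one>\<^bsub>G (leaves S)\<^esub>, S) ?k = (grow d ?k S, \<one>\<^bsub>G (leaves (grow d ?k S))\<^esub>, grow d ?k S)"
      using rho_one[OF n] kap_one[OF n f(1,2)] grow_leaves[OF 1(2) f(1,2)] by (simp add: ex_simp)
    have vg: "dvalid d (grow d ?k S)" using grow_valid 1 f by blast
    have lg: "le (grow d ?k S) W" using le_grow_internal 1 f by blast
    have "Exp (grow d ?k S, \<one>\<^bsub>G (leaves (grow d ?k S))\<^esub>, grow d ?k S) W = (W, \<one>\<^bsub>G (leaves W)\<^esub>, W)"
      using 1(1)[of "grow d ?k S"] vS 1 False vg lg ex1 by simp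
    then show ?thesis using e ex1 by simp
  qed
qed

lemma one_cls: "dvalid d T \<Longrightarrow> \<one>\<^bsub>TGG\<^esub> = cls (T, \<one>\<^bsub>G (leaves T)\<^esub>, T)"
proof -
  assume vT: "dvalid d T"
  have v: "vt (Leaf, \<one>\<^bsub>G 1\<^esub>, Leaf)" by (rule vt_unit)
  have "(Leaf, \<one>\<^bsub>G 1\<^esub>, Leaf) = (Leaf, \<one>\<^bsub>G (leaves Leaf)\<^esub>, Leaf)" by simp
  then have "Exp (Leaf, \<one>\<^bsub>G 1\<^esub>, Leaf) T = (T, \<one>\<^bsub>G (leaves T)\<^esub>, T)"
    using Exp_one[of Leaf T] vT le_Leaf by simp
  then have "((Leaf, \<one>\<^bsub>G 1\<^esub>, Leaf), (T, \<one>\<^bsub>G (leaves T)\<^esub>, T)) \<in> E"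
    using Exp_E[OF v vT] le_Leaf by simp
  then show ?thesis using TG_one cls_eq_iff by simp
qed

lemma TG_group: "group TGG"
proof (rule groupI)
  fix x y assume "x \<in> carrier TGG" "y \<in> carrier TGG"
  then obtain t s where ts: "vt t" "vt s" "x = cls t" "y = cls s" using TG_carrier by auto
  then obtain t' s' where al: "vt t'" "vt s'" "(t,t') \<in> E" "(s,s') \<in> E" "rt t' = lt s'" using align by blast
  have "x = cls t'" "y = cls s'" using ts al cls_eq_iff by auto
  then have "x \<otimes>\<^bsub>TGG\<^esub> y = cls (tprod t' s')" using mult_cls al by simp
  moreover have "vt (tprod t' s')" using tprod_valid al by blast
  ultimately show "x \<otimes>\<^bsub>TGG\<^esub> y \<in> carrier TGG" using cls_carrier by simp
next
  have "vt (Leaf, \<one>\<^bsub>G 1\<^esub>, Leaf)" by (rule vt_unit)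
  then show "\<one>\<^bsub>TGG\<^esub> \<in> carrier TGG" using TG_one cls_carrier by simp
next
  fix x y z assume "x \<in> carrier TGG" "y \<in> carrier TGG" "z \<in> carrier TGG"
  then obtain a b c where abc: "vt a" "vt b" "vt c" "x = cls a" "y = cls b" "z = cls c" using TG_carrier by auto
  obtain a1 b1 where al: "vt a1" "vt b1" "(a,a1) \<in> E" "(b,b1) \<in> E" "rt a1 = lt b1" using align abc by blast
  let ?C = "join (rt b1) (lt c)"
  have v1: "dvalid d (rt b1)" "dvalid d (lt c)" using vt_n al(2) abc(3) by auto
  have vC: "dvalid d ?C" "le (rt b1) ?C" "le (lt c) ?C"
    using join_valid[OF v1] join_le1[OF v1] join_le2[OF v1] by auto
  define b2 where "b2 = Exp b1 ?C"
  have b2: "vt b2" "rt b2 = ?C" "(b1,b2) \<in> E" "le (lt b1) (lt b2)"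
    using Exp_props[OF al(2) vC(1,2)] Exp_E[OF al(2) vC(1,2)] unfolding b2_def by auto
  define c2 where "c2 = LExp c ?C"
  have c2: "vt c2" "lt c2 = ?C" "(c,c2) \<in> E" using LExp_props[OF abc(3) vC(1,3)] unfolding c2_def by auto
  have vlb2: "dvalid d (lt b2)" using vt_n b2 by blast
  define a2 where "a2 = Exp a1 (lt b2)"
  have a2: "vt a2" "rt a2 = lt b2" "(a1,a2) \<in> E"
    using Exp_props[OF al(1) vlb2] Exp_E[OF al(1) vlb2] al(5) b2(4) unfolding a2_def by auto
  have "(a,a2) \<in> E" using E_trans[OF al(3) a2(3)] .
  then have x2: "x = cls a2" using abc(4) cls_eq_iff by simp
  have "(b,b2) \<in> E" using E_trans[OF al(4) b2(3)] .
  then have y2: "y = cls b2" using abc(5) cls_eq_iff by simp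
  have z2: "z = cls c2" using abc(6) c2(3) cls_eq_iff by simp
  have vab: "vt (tprod a2 b2)" using tprod_valid a2(1) b2(1) a2(2) by blast
  have vbc: "vt (tprod b2 c2)" using tprod_valid b2(1) c2(1) b2(2) c2(2) by simp
  have r1: "rt (tprod a2 b2) = lt c2" using b2(2) c2(2) by (simp add: tprod_def)
  have r2: "rt a2 = lt (tprod b2 c2)" using a2(2) by (simp add: tprod_def)
  have "x \<otimes>\<^bsub>TGG\<^esub> y = cls (tprod a2 b2)" using x2 y2 mult_cls a2(1) b2(1) a2(2) by simp
  then have "x \<otimes>\<^bsub>TGG\<^esub> y \<otimes>\<^bsub>TGG\<^esub> z = cls (tprod (tprod a2 b2) c2)"
    using z2 mult_cls[OF vab c2(1) r1] by simp
  moreover have "y \<otimes>\<^bsub>TGG\<^esub> z = cls (tprod b2 c2)" using y2 z2 mult_cls b2(1) c2(1) b2(2) c2(2) by simp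
  then have "x \<otimes>\<^bsub>TGG\<^esub> (y \<otimes>\<^bsub>TGG\<^esub> z) = cls (tprod a2 (tprod b2 c2))"
    using x2 mult_cls[OF a2(1) vbc r2] by simp
  moreover have "tprod (tprod a2 b2) c2 = tprod a2 (tprod b2 c2)"
  proof -
    obtain A g B where a: "a2 = (A,g,B)" by (cases a2)
    obtain B' h C where b: "b2 = (B',h,C)" by (cases b2)
    obtain C' k D where c: "c2 = (C',k,D)" by (cases c2)
    have n: "1 \<le> leaves A" "leaves B' = leaves A" "leaves C' = leaves A"
      using vt_n a2 b2 c2 a b c by auto
    interpret group "G (leaves A)" using grp n by simp
    have g: "g \<in> carrier (G (leaves A))" using vt_n[OF a2(1)] a by simp
    have "h \<in> carrier (G (leaves B'))" using vt_n[OF b2(1)] b by simp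
    then have h: "h \<in> carrier (G (leaves A))" using n(2) by simp
    have "k \<in> carrier (G (leaves C'))" using vt_n[OF c2(1)] c by simp
    then have "k \<in> carrier (G (leaves A))" using n(3) by simp
    note g h this
    then show ?thesis using a b c n by (simp add: tprod_simp m_assoc)
  qed
  ultimately show "x \<otimes>\<^bsub>TGG\<^esub> y \<otimes>\<^bsub>TGG\<^esub> z = x \<otimes>\<^bsub>TGG\<^esub> (y \<otimes>\<^bsub>TGG\<^esub> z)" by simp
next
  fix x assume "x \<in> carrier TGG"
  then obtain t where t: "vt t" "x = cls t" using TG_carrier by auto
  obtain T g U where tt: "t = (T,g,U)" by (cases t)
  have v: "dvalid d T" "1 \<le> leaves T" "g \<in> carrier (G (leaves T))" using vt_n t tt by auto
  have "\<one>\<^bsub>TGG\<^esub> = cls (T, \<one>\<^bsub>G (leaves T)\<^esub>, T)" using one_cls v by blast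
  moreover have "vt (T, \<one>\<^bsub>G (leaves T)\<^esub>, T)"
  proof -
    interpret group "G (leaves T)" using grp v by simp
    show ?thesis using v by (simp add: vt_def2)
  qed
  moreover have "tprod (T, \<one>\<^bsub>G (leaves T)\<^esub>, T) t = t"
  proof -
    interpret group "G (leaves T)" using grp v by simp
    show ?thesis using tt v by (simp add: tprod_simp)
  qed
  ultimately show "\<one>\<^bsub>TGG\<^esub> \<otimes>\<^bsub>TGG\<^esub> x = x" using mult_cls t tt by simp
next
  fix x assume "x \<in> carrier TGG"
  then obtain t where t: "vt t" "x = cls t" using TG_carrier by auto
  obtain T g U where tt: "t = (T,g,U)" by (cases t)
  have v: "dvalid d U" "1 \<le> leaves T" "g \<in> carrier (G (leaves T))" "leaves U = leaves T" using vt_n t tt by auto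
  have vi: "vt (tinv t)" using tinv_valid t by blast
  have "cls (tinv t) \<otimes>\<^bsub>TGG\<^esub> x = cls (tprod (tinv t) t)" using mult_cls vi t by (simp add: tinv_def)
  also have "tprod (tinv t) t = (U, \<one>\<^bsub>G (leaves U)\<^esub>, U)"
  proof -
    interpret group "G (leaves T)" using grp v by simp
    show ?thesis using tt v by (simp add: tprod_simp tinv_simp)
  qed
  also have "cls (U, \<one>\<^bsub>G (leaves U)\<^esub>, U) = \<one>\<^bsub>TGG\<^esub>" using one_cls v by simp
  finally show "\<exists>y\<in>carrier TGG. y \<otimes>\<^bsub>TGG\<^esub> x = \<one>\<^bsub>TGG\<^esub>" using cls_carrier[OF vi] by blast
qed

lemma inv_cls: "vt t \<Longrightarrow> inv\<^bsub>TGG\<^esub> (cls t) = cls (tinv t)"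
proof -
  assume t: "vt t"
  interpret group TGG by (rule TG_group)
  obtain T g U where tt: "t = (T,g,U)" by (cases t)
  have v: "dvalid d U" "1 \<le> leaves T" "g \<in> carrier (G (leaves T))" "leaves U = leaves T" using vt_n t tt by auto
  have vi: "vt (tinv t)" using tinv_valid t by blast
  have "cls (tinv t) \<otimes>\<^bsub>TGG\<^esub> cls t = cls (tprod (tinv t) t)" using mult_cls vi t by (simp add: tinv_def)
  also have "tprod (tinv t) t = (U, \<one>\<^bsub>G (leaves U)\<^esub>, U)"
  proof -
    interpret G: group "G (leaves T)" using grp v by simp
    show ?thesis using tt v by (simp add: tprod_simp tinv_simp)
  qed
  also have "cls (U, \<one>\<^bsub>G (leaves U)\<^esub>, U) = \<one>\<^bsub>TGG\<^esub>" using one_cls v by simp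
  finally show ?thesis using inv_equality cls_carrier[OF vi] cls_carrier[OF t] by blast
qed

end


fun giter :: "nat \<Rightarrow> nat \<Rightarrow> nat \<Rightarrow> dtree \<Rightarrow> dtree" where
  "giter d k 0 T = T"
| "giter d k (Suc i) T = grow d k (giter d k i T)"

lemma giter_props:
  assumes "dvalid d T" "1 \<le> k" "k \<le> leaves T" "d \<ge> 1"
  shows "dvalid d (giter d k i T) \<and> leaves (giter d k i T) = leaves T + i * (d - 1) \<and> le T (giter d k i T) \<and>
    (\<forall>j. 1 \<le> j \<and> j < k \<longrightarrow> addrs (giter d k i T) ! (j-1) = addrs T ! (j-1)) \<and>
    addrs (giter d k i T) ! (k-1) = addrs T ! (k-1) @ replicate i 0"
proof (induction i)
  case 0 then show ?case using assms by (simp add: le_refl)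
next
  case (Suc i)
  let ?T = "giter d k i T"
  have k2: "k \<le> leaves ?T" using Suc assms by simp
  have v: "dvalid d (grow d k ?T)" "leaves (grow d k ?T) = leaves ?T + d - 1"
    using grow_valid grow_leaves Suc assms k2 by auto
  have l: "le T (grow d k ?T)" using le_trans Suc le_grow[of d ?T k] assms k2 by blast
  have b: "\<forall>j. 1 \<le> j \<and> j < k \<longrightarrow> addrs (grow d k ?T) ! (j-1) = addrs T ! (j-1)"
    using addr_grow_before[of d ?T k] Suc assms k2 by auto
  have "addrs (grow d k ?T) ! (k-1) = addrs ?T ! (k-1) @ [0]"
    using addr_grow_block[of d ?T k 0] Suc assms k2 by simp
  then have c: "addrs (grow d k ?T) ! (k-1) = addrs T ! (k-1) @ replicate (Suc i) 0"
    using Suc by (simp add: replicate_append_same)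
  have "leaves (grow d k ?T) = leaves T + Suc i * (d - 1)" using v Suc assms(4) by simp
  then show ?case using v l b c by simp
qed

lemma last_addrsl: "ts \<noteq> [] \<Longrightarrow> (\<forall>t\<in>set ts. addrs t \<noteq> []) \<Longrightarrow>
  addrsl i ts \<noteq> [] \<and> last (addrsl i ts) = (i + length ts - 1) # last (addrs (last ts))"
proof (induction ts arbitrary: i)
  case Nil then show ?case by simp
next
  case (Cons t ts)
  show ?case
  proof (cases "ts = []")
    case True then show ?thesis using Cons by (simp add: last_map)
  next
    case False
    then have "addrsl (Suc i) ts \<noteq> [] \<and> last (addrsl (Suc i) ts) = (Suc i + length ts - 1) # last (addrs (last ts))"
      using Cons by simp
    then show ?thesis using False by simp
  qed
qed

lemma last_leaf: "d \<ge> 1 \<Longrightarrow> dvalid d T \<Longrightarrow> addrs T \<noteq> [] \<and> (\<forall>x\<in>set (last (addrs T)). x = d - 1)"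
proof (induction T)
  case Leaf then show ?case by simp
next
  case (Node ts)
  have l: "length ts = d" "ts \<noteq> []" using Node.prems by auto
  have ne: "\<forall>t\<in>set ts. addrs t \<noteq> []" using addrs_ne Node.prems by auto
  have L: "addrsl 0 ts \<noteq> [] \<and> last (addrsl 0 ts) = (length ts - 1) # last (addrs (last ts))"
    using last_addrsl[OF l(2) ne, of 0] by simp
  have "last ts \<in> set ts" using l by simp
  then have "\<forall>x\<in>set (last (addrs (last ts))). x = d - 1" using Node by auto
  then show ?case using L l by auto
qed

definition incomp :: "nat list \<Rightarrow> nat list \<Rightarrow> bool" where
  "incomp a b \<longleftrightarrow> \<not>(\<exists>c. a = b @ c) \<and> \<not>(\<exists>c. b = a @ c)"

lemma incomp_ext: "incomp a b \<Longrightarrow> incomp (a @ c) (b @ e)"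
  unfolding incomp_def
proof (intro conjI notI)
  assume a: "\<not> (\<exists>c. a = b @ c) \<and> \<not> (\<exists>c. b = a @ c)"
  { assume "\<exists>f. a @ c = (b @ e) @ f"
    then obtain f where "a @ c = b @ (e @ f)" by auto
    then show False using prefix_cases[of a c b "e @ f"] a by blast }
  { assume "\<exists>f. b @ e = (a @ c) @ f"
    then obtain f where "b @ e = a @ (c @ f)" by auto
    then show False using prefix_cases[of b e a "c @ f"] a by blast }
qed

lemma incomp_sym: "incomp a b \<Longrightarrow> incomp b a" unfolding incomp_def by blast

lemma leaves_incomp: "a \<in> set (addrs T) \<Longrightarrow> b \<in> set (addrs T) \<Longrightarrow> a \<noteq> b \<Longrightarrow> incomp a b"
  unfolding incomp_def
proof (intro conjI notI)
  assume a: "a \<in> set (addrs T)" "b \<in> set (addrs T)" "a \<noteq> b"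
  { assume "\<exists>c. a = b @ c"
    then obtain c where "a = b @ c" by blast
    then show False using addrs_antichain[of b T c] a by simp }
  { assume "\<exists>c. b = a @ c"
    then obtain c where "b = a @ c" by blast
    then show False using addrs_antichain[of a T c] a by simp }
qed

lemma mem_addrs_NodeI: "j < length ts \<Longrightarrow> a' \<in> set (addrs (ts!j)) \<Longrightarrow> j # a' \<in> set (addrs (Node ts))"
  by (subst mem_addrs_Node) auto

lemma node_valid: "dvalid d (Node (map f [0..<d])) \<longleftrightarrow> (\<forall>j<d. dvalid d (f j))"
  by auto

lemma path_tree: "d \<ge> 1 \<Longrightarrow> \<forall>x\<in>set a. x < d \<Longrightarrow> \<exists>P. dvalid d P \<and> a \<in> set (addrs P)"
proof (induction a)
  case Nil then show ?case by (intro exI[of _ Leaf]) simp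
next
  case (Cons i a)
  have "\<forall>x\<in>set a. x < d" using Cons.prems by simp
  then obtain P where P: "dvalid d P" "a \<in> set (addrs P)" using Cons.IH Cons.prems(1) by blast
  have id: "i < d" using Cons.prems by simp
  let ?ts = "map (\<lambda>j. if j = i then P else Leaf) [0..<d]"
  have v: "dvalid d (Node ?ts)" unfolding node_valid using P by simp
  have "i < length ?ts" "?ts ! i = P" using id by simp_all
  then have "i # a \<in> set (addrs (Node ?ts))" using mem_addrs_NodeI[of i ?ts a] P(2) by simp
  then show ?case using v by blast
qed

lemma two_tree: "d \<ge> 1 \<Longrightarrow> \<forall>x\<in>set a. x < d \<Longrightarrow> \<forall>x\<in>set b. x < d \<Longrightarrow> incomp a b \<Longrightarrow>
  \<exists>P. dvalid d P \<and> a \<in> set (addrs P) \<and> b \<in> set (addrs P)"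
proof (induction a arbitrary: b)
  case Nil then show ?case by (simp add: incomp_def)
next
  case (Cons i a)
  obtain j b' where b: "b = j # b'" using Cons.prems(4) by (cases b) (auto simp: incomp_def)
  show ?case
  proof (cases "i = j")
    case True
    then have "incomp a b'" using Cons.prems(4) b by (auto simp: incomp_def)
    then obtain P where P: "dvalid d P" "a \<in> set (addrs P)" "b' \<in> set (addrs P)"
      using Cons.IH[of b'] Cons.prems b by auto
    let ?ts = "map (\<lambda>k. if k = i then P else Leaf) [0..<d]"
    have v: "dvalid d (Node ?ts)" unfolding node_valid using P by simp
    have "i < length ?ts" "?ts ! i = P" using Cons.prems by auto
    then have "i # a \<in> set (addrs (Node ?ts))" "j # b' \<in> set (addrs (Node ?ts))"
      using mem_addrs_NodeI[of i ?ts a] mem_addrs_NodeI[of i ?ts b'] P True by simp_all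
    then show ?thesis using v b by blast
  next
    case False
    obtain P1 where P1: "dvalid d P1" "a \<in> set (addrs P1)" using path_tree[of d a] Cons.prems(1,2) by auto
    obtain P2 where P2: "dvalid d P2" "b' \<in> set (addrs P2)" using path_tree[of d b'] Cons.prems(1,3) b by auto
    let ?ts = "map (\<lambda>k. if k = i then P1 else if k = j then P2 else Leaf) [0..<d]"
    have v: "dvalid d (Node ?ts)" unfolding node_valid using P1 P2 by simp
    have "i < length ?ts" "?ts ! i = P1" "j < length ?ts" "?ts ! j = P2" using Cons.prems b False by auto
    then have "i # a \<in> set (addrs (Node ?ts))" "j # b' \<in> set (addrs (Node ?ts))"
      using mem_addrs_NodeI[of i ?ts a] mem_addrs_NodeI[of j ?ts b'] P1 P2 by simp_all
    then show ?thesis using v b by blast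
  qed
qed


context csys begin

definition maps :: "dtree \<times> 'g \<times> dtree \<Rightarrow> nat list \<Rightarrow> nat list \<Rightarrow> bool" where
  "maps t a b \<longleftrightarrow> vt t \<and> (\<exists>k. 1 \<le> k \<and> k \<le> leaves (rt t) \<and> addrs (rt t) ! (k-1) = a \<and>
      addrs (lt t) ! (\<rho> (leaves (lt t)) (mid t) k - 1) = b)"

lemma maps_mem: "maps t a b \<Longrightarrow> a \<in> set (addrs (rt t)) \<and> b \<in> set (addrs (lt t))"
proof -
  assume m: "maps t a b"
  then obtain k where k: "vt t" "1 \<le> k" "k \<le> leaves (rt t)" "addrs (rt t) ! (k-1) = a"
    "addrs (lt t) ! (\<rho> (leaves (lt t)) (mid t) k - 1) = b" unfolding maps_def by blast
  have n: "1 \<le> leaves (lt t)" "leaves (rt t) = leaves (lt t)" "mid t \<in> carrier (G (leaves (lt t)))" using vt_n k(1) by auto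
  have r: "1 \<le> \<rho> (leaves (lt t)) (mid t) k \<and> \<rho> (leaves (lt t)) (mid t) k \<le> leaves (lt t)"
    using rho_range[OF n(1) n(3)] k n by simp
  have "k - 1 < length (addrs (rt t))" using k by (simp add: len_addrs)
  moreover have "\<rho> (leaves (lt t)) (mid t) k - 1 < leaves (lt t)" using r by linarith
  then have "\<rho> (leaves (lt t)) (mid t) k - 1 < length (addrs (lt t))" by (simp add: len_addrs)
  ultimately show ?thesis using k by (metis nth_mem)
qed

lemma maps_det: "maps t a b \<Longrightarrow> maps t a b' \<Longrightarrow> b = b'"
proof -
  assume m1: "maps t a b" and m2: "maps t a b'"
  obtain k where k: "vt t" "1 \<le> k" "k \<le> leaves (rt t)" "addrs (rt t) ! (k-1) = a"
    "addrs (lt t) ! (\<rho> (leaves (lt t)) (mid t) k - 1) = b" using m1 unfolding maps_def by blast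
  obtain k' where k': "1 \<le> k'" "k' \<le> leaves (rt t)" "addrs (rt t) ! (k'-1) = a"
    "addrs (lt t) ! (\<rho> (leaves (lt t)) (mid t) k' - 1) = b'" using m2 unfolding maps_def by blast
  have "k - 1 < length (addrs (rt t))" "k' - 1 < length (addrs (rt t))" using k k' by (simp_all add: len_addrs)
  then have "k - 1 = k' - 1" using nth_eq_iff_index_eq[OF distinct_addrs] k(4) k'(3) by metis
  then have "k = k'" using k k' by simp
  then show ?thesis using k k' by simp
qed

lemma maps_det2: "maps t a b \<Longrightarrow> maps t a' b \<Longrightarrow> a = a'"
proof -
  assume m1: "maps t a b" and m2: "maps t a' b"
  obtain k where k: "vt t" "1 \<le> k" "k \<le> leaves (rt t)" "addrs (rt t) ! (k-1) = a"
    "addrs (lt t) ! (\<rho> (leaves (lt t)) (mid t) k - 1) = b" using m1 unfolding maps_def by blast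
  obtain k' where k': "1 \<le> k'" "k' \<le> leaves (rt t)" "addrs (rt t) ! (k'-1) = a'"
    "addrs (lt t) ! (\<rho> (leaves (lt t)) (mid t) k' - 1) = b" using m2 unfolding maps_def by blast
  have n: "1 \<le> leaves (lt t)" "leaves (rt t) = leaves (lt t)" "mid t \<in> carrier (G (leaves (lt t)))" using vt_n k(1) by auto
  let ?s = "\<rho> (leaves (lt t)) (mid t)"
  have r: "1 \<le> ?s k \<and> ?s k \<le> leaves (lt t)" "1 \<le> ?s k' \<and> ?s k' \<le> leaves (lt t)"
    using rho_range[OF n(1) n(3)] k k' n by auto
  have "?s k - 1 < leaves (lt t)" "?s k' - 1 < leaves (lt t)" using r by linarith+
  then have "?s k - 1 < length (addrs (lt t))" "?s k' - 1 < length (addrs (lt t))" by (simp_all add: len_addrs)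
  then have "?s k - 1 = ?s k' - 1" using nth_eq_iff_index_eq[OF distinct_addrs] k(5) k'(4) by metis
  then have "?s k = ?s k'" using r by linarith
  then have "k = k'" using rho_inj[OF n(1) n(3)] by blast
  then show ?thesis using k k' by simp
qed

lemma maps_ex:
  assumes m: "maps t a b" and k: "1 \<le> k" "k \<le> leaves (rt t)" "addrs (rt t) ! (k-1) \<noteq> a"
  shows "maps (ex t k) a b"
proof -
  obtain T g U where t: "t = (T,g,U)" by (cases t)
  obtain j where j: "vt t" "1 \<le> j" "j \<le> leaves U" "addrs U ! (j-1) = a"
    "addrs T ! (\<rho> (leaves T) g j - 1) = b" using m t unfolding maps_def by auto
  let ?n = "leaves T" and ?s = "\<rho> (leaves T) g"
  have v: "dvalid d T" "dvalid d U" "leaves T = leaves U" "g \<in> carrier (G ?n)" "1 \<le> ?n"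
    using vt_n[OF j(1)] t by auto
  have kn: "1 \<le> k" "k \<le> ?n" using k t v by auto
  have jn: "1 \<le> j" "j \<le> ?n" using j v by auto
  have jk: "j \<noteq> k" using j k t by auto
  have sk: "1 \<le> ?s k \<and> ?s k \<le> ?n" "1 \<le> ?s j \<and> ?s j \<le> ?n" using rho_range[OF v(5) v(4)] kn jn by auto
  have sjk: "?s j \<noteq> ?s k" using rho_inj[OF v(5) v(4)] jk by blast
  have ve: "vt (ex t k)" and le: "leaves (lt (ex t k)) = ?n + d - 1" using ex_valid[OF j(1) k(1,2)] t by auto
  let ?j' = "blk_start d k j"
  have j'r: "1 \<le> ?j' \<and> ?j' \<le> ?n + d - 1" using blk_start_range[of j ?n k] jn by simp
  have rt': "rt (ex t k) = grow d k U" and lt': "lt (ex t k) = grow d (?s k) T" and mid': "mid (ex t k) = \<kappa> ?n k g"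
    using t by (simp_all add: ex_simp)
  have lr: "leaves (grow d k U) = ?n + d - 1" using grow_leaves[OF v(2)] kn v by simp
  have a1: "addrs (grow d k U) ! (?j' - 1) = a" using addr_grow_shift[OF v(2), of k j] kn jn v jk j(4) by simp
  have r1: "\<rho> (?n + d - 1) (\<kappa> ?n k g) ?j' = blk_start d (?s k) (?s j)" using rho_kap_out[OF v(5) kn v(4) jn jk] .
  have a2: "addrs (grow d (?s k) T) ! (blk_start d (?s k) (?s j) - 1) = b"
    using addr_grow_shift[OF v(1), of "?s k" "?s j"] sk sjk j(5) by simp
  show ?thesis unfolding maps_def
    using ve rt' lt' mid' le lr j'r a1 r1 a2 by (intro conjI exI[of _ ?j']) simp_all
qed

lemma maps_Exp: "maps t a b \<Longrightarrow> dvalid d W \<Longrightarrow> le (rt t) W \<Longrightarrow> a \<in> set (addrs W) \<Longrightarrow> maps (Exp t W) a b"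
proof (induction t W rule: Exp.induct)
  case (1 t W)
  have vt: "vt t" using 1(2) unfolding maps_def by blast
  show ?case
  proof (cases "rt t = W")
    case True
    then show ?thesis using 1(2) Exp_stop[of t W] by simp
  next
    case False
    let ?k = "fpos (rt t) W"
    have f: "1 \<le> ?k" "?k \<le> leaves (rt t)" "addrs (rt t) ! (?k - 1) \<notin> set (addrs W)"
      using fpos[of "rt t" W] 1 False vt_n vt by auto
    have et: "Exp t W = Exp (ex t ?k) W" using Exp_step vt 1 False by blast
    have "le (grow d ?k (rt t)) W" using le_grow_internal f 1 vt_n vt by blast
    then have le2: "le (rt (ex t ?k)) W" by (simp add: ex_def)
    have ne: "addrs (rt t) ! (?k - 1) \<noteq> a" using f(3) 1(5) by blast
    have me: "maps (ex t ?k) a b" using maps_ex[OF 1(2) f(1,2) ne] .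
    have c: "vt t \<and> dvalid d W \<and> le (rt t) W \<and> rt t \<noteq> W" using vt 1 False by blast
    show ?thesis using 1(1)[OF c me 1(3) le2 1(5)] et by simp
  qed
qed

lemma maps_tinv: "maps t a b \<Longrightarrow> maps (tinv t) b a"
proof -
  assume m: "maps t a b"
  obtain T g U where t: "t = (T,g,U)" by (cases t)
  obtain j where j: "vt t" "1 \<le> j" "j \<le> leaves U" "addrs U ! (j-1) = a"
    "addrs T ! (\<rho> (leaves T) g j - 1) = b" using m t unfolding maps_def by auto
  let ?n = "leaves T" and ?s = "\<rho> (leaves T) g"
  have v: "dvalid d T" "dvalid d U" "leaves T = leaves U" "g \<in> carrier (G ?n)" "1 \<le> ?n"
    using vt_n[OF j(1)] t by auto
  have sj: "1 \<le> ?s j \<and> ?s j \<le> ?n" using rho_range[OF v(5) v(4)] j v by auto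
  have inv: "\<rho> (leaves T) (inv\<^bsub>G (leaves T)\<^esub> g) (?s j) = j" using rho_inv[OF v(5) v(4)] .
  have vi: "vt (tinv t)" using tinv_valid j(1) by blast
  have ti: "tinv t = (U, inv\<^bsub>G (leaves T)\<^esub> g, T)" using t by (simp add: tinv_simp)
  have "leaves U = leaves T" using v by simp
  then show ?thesis unfolding maps_def using vi ti sj inv j
    by (intro conjI exI[of _ "?s j"]) simp_all
qed

definition Rl :: "(dtree \<times> 'g \<times> dtree) set \<Rightarrow> (nat list \<times> nat list) set" where
  "Rl X = {(a,b). \<exists>t. maps t a b \<and> cls t = X}"

lemma Rl_common:
  assumes "maps t1 a b" "maps t2 a b'" "cls t1 = cls t2"
  shows "\<exists>e. maps e a b \<and> maps e a b'"
proof -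
  have v: "vt t1" "vt t2" using assms unfolding maps_def by auto
  have a: "a \<in> set (addrs (rt t1))" "a \<in> set (addrs (rt t2))" using maps_mem assms by auto
  have vv: "dvalid d (rt t1)" "dvalid d (rt t2)" using vt_n v by auto
  let ?W = "join (rt t1) (rt t2)"
  have W: "dvalid d ?W" "le (rt t1) ?W" "le (rt t2) ?W" "a \<in> set (addrs ?W)"
    using join_valid[OF vv] join_le1[OF vv] join_le2[OF vv] join_leaf[OF vv a] by auto
  have e1: "vt (Exp t1 ?W)" "rt (Exp t1 ?W) = ?W" "(t1, Exp t1 ?W) \<in> E"
    using Exp_props[OF v(1) W(1,2)] Exp_E[OF v(1) W(1,2)] by auto
  have e2: "vt (Exp t2 ?W)" "rt (Exp t2 ?W) = ?W" "(t2, Exp t2 ?W) \<in> E"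
    using Exp_props[OF v(2) W(1,3)] Exp_E[OF v(2) W(1,3)] by auto
  have "(t1, t2) \<in> E" using assms(3) cls_eq_iff by blast
  then have "(Exp t1 ?W, Exp t2 ?W) \<in> E" using e1(3) e2(3) E_sym E_trans by blast
  then have eq: "Exp t1 ?W = Exp t2 ?W" using uniq_rt[OF e1(1) e2(1)] e1(2) e2(2) by simp
  have "maps (Exp t1 ?W) a b" using maps_Exp[OF assms(1) W(1,2,4)] .
  moreover have "maps (Exp t2 ?W) a b'" using maps_Exp[OF assms(2) W(1,3,4)] .
  ultimately have "maps (Exp t1 ?W) a b \<and> maps (Exp t1 ?W) a b'" using eq by simp
  then show ?thesis by blast
qed

lemma Rl_fun: "(a,b) \<in> Rl X \<Longrightarrow> (a,b') \<in> Rl X \<Longrightarrow> b = b'"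
proof -
  assume "(a,b) \<in> Rl X" "(a,b') \<in> Rl X"
  then obtain t1 t2 where "maps t1 a b" "maps t2 a b'" "cls t1 = X" "cls t2 = X" unfolding Rl_def by auto
  then obtain e where "maps e a b" "maps e a b'" using Rl_common by metis
  then show ?thesis using maps_det by blast
qed

lemma Rl_inj: "(a,b) \<in> Rl X \<Longrightarrow> (a',b) \<in> Rl X \<Longrightarrow> a = a'"
proof -
  assume "(a,b) \<in> Rl X" "(a',b) \<in> Rl X"
  then obtain t1 t2 where m: "maps t1 a b" "maps t2 a' b" "cls t1 = X" "cls t2 = X" unfolding Rl_def by auto
  have v: "vt t1" "vt t2" using m unfolding maps_def by auto
  have "maps (tinv t1) b a" "maps (tinv t2) b a'" using maps_tinv m by auto
  moreover have "cls (tinv t1) = cls (tinv t2)"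
  proof -
    have "(t1,t2) \<in> E" using m(3,4) cls_eq_iff[of t1 t2] by simp
    then show ?thesis using tinv_E cls_eq_iff by blast
  qed
  ultimately obtain e where "maps e b a" "maps e b a'" using Rl_common by metis
  then show ?thesis using maps_det by blast
qed

lemma maps_prod:
  assumes "vt t" "vt s" "rt t = lt s" "maps s c a" "maps t a b"
  shows "maps (tprod t s) c b"
proof -
  obtain T g U where t: "t = (T,g,U)" by (cases t)
  obtain U' h W where s: "s = (U',h,W)" by (cases s)
  let ?n = "leaves T"
  have v: "dvalid d T" "dvalid d U" "leaves T = leaves U" "g \<in> carrier (G ?n)" "1 \<le> ?n"
    using vt_n[OF assms(1)] t by auto
  have UU: "U' = U" using assms(3) t s by simp
  have v': "dvalid d W" "leaves U = leaves W" "h \<in> carrier (G ?n)"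
    using vt_n[OF assms(2)] s UU v by auto
  obtain k where k: "1 \<le> k" "k \<le> leaves W" "addrs W ! (k-1) = c" "addrs U ! (\<rho> ?n h k - 1) = a"
    using assms(4) s UU v unfolding maps_def by auto
  obtain j where j: "1 \<le> j" "j \<le> leaves U" "addrs U ! (j-1) = a" "addrs T ! (\<rho> ?n g j - 1) = b"
    using assms(5) t unfolding maps_def by auto
  have hk: "1 \<le> \<rho> ?n h k \<and> \<rho> ?n h k \<le> ?n" using rho_range[OF v(5) v'(3)] k v v' by simp
  have "\<rho> ?n h k - 1 < length (addrs U)" "j - 1 < length (addrs U)" using hk j v by (simp_all add: len_addrs, linarith)
  then have "\<rho> ?n h k - 1 = j - 1" using nth_eq_iff_index_eq[OF distinct_addrs] k(4) j(3) by metis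
  then have hkj: "\<rho> ?n h k = j" using hk j by linarith
  have r: "\<rho> ?n (g \<otimes>\<^bsub>G ?n\<^esub> h) k = \<rho> ?n g j" using rho_mult[OF v(5) v(4) v'(3)] hkj by simp
  have vp: "vt (tprod t s)" using tprod_valid assms by blast
  have tp: "tprod t s = (T, g \<otimes>\<^bsub>G ?n\<^esub> h, W)" using t s by (simp add: tprod_simp)
  show ?thesis unfolding maps_def using vp tp k j r v v'
    by (intro conjI exI[of _ k]) simp_all
qed

lemma Rl_comp:
  assumes "(c,a) \<in> Rl Y" "(a,b) \<in> Rl X"
  shows "(c,b) \<in> Rl (X \<otimes>\<^bsub>TGG\<^esub> Y)"
proof -
  obtain tY where tY: "maps tY c a" "cls tY = Y" using assms(1) unfolding Rl_def by auto
  obtain tX where tX: "maps tX a b" "cls tX = X" using assms(2) unfolding Rl_def by auto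
  have v: "vt tY" "vt tX" using tY tX unfolding maps_def by auto
  have a: "a \<in> set (addrs (lt tY))" "a \<in> set (addrs (rt tX))" using maps_mem tY tX by auto
  have vv: "dvalid d (lt tY)" "dvalid d (rt tX)" using vt_n v by auto
  let ?M = "join (lt tY) (rt tX)"
  have M: "dvalid d ?M" "le (lt tY) ?M" "le (rt tX) ?M" "a \<in> set (addrs ?M)"
    using join_valid[OF vv] join_le1[OF vv] join_le2[OF vv] join_leaf[OF vv a] by auto
  define tX' where "tX' = Exp tX ?M"
  have X': "vt tX'" "rt tX' = ?M" "(tX, tX') \<in> E" "maps tX' a b"
    using Exp_props[OF v(2) M(1,3)] Exp_E[OF v(2) M(1,3)] maps_Exp[OF tX(1) M(1,3,4)] unfolding tX'_def by auto
  have vi: "vt (tinv tY)" using tinv_valid v by blast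
  have ri: "rt (tinv tY) = lt tY" by (simp add: tinv_def)
  have mi: "maps (tinv tY) a c" using maps_tinv tY by blast
  define e where "e = Exp (tinv tY) ?M"
  have e: "vt e" "rt e = ?M" "(tinv tY, e) \<in> E" "maps e a c"
    using Exp_props[OF vi M(1)] Exp_E[OF vi M(1)] maps_Exp[OF mi M(1)] M(2,4) ri unfolding e_def by auto
  define tY' where "tY' = tinv e"
  have Y'1: "vt tY'" unfolding tY'_def using tinv_valid[OF e(1)] .
  have Y'2: "lt tY' = ?M" unfolding tY'_def using e(2) by (simp add: tinv_def)
  have Y'3: "maps tY' c a" unfolding tY'_def using maps_tinv[OF e(4)] .
  note Y' = Y'1 Y'2 Y'3
  have "(tinv (tinv tY), tY') \<in> E" using tinv_E[OF e(3)] unfolding tY'_def .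
  then have "(tY, tY') \<in> E" using tinv_tinv v by simp
  then have cY: "cls tY' = Y" using tY cls_eq_iff by (metis)
  have cX: "cls tX' = X" using tX X' cls_eq_iff by metis
  have r: "rt tX' = lt tY'" using X' Y' by simp
  have "cls (tprod tX' tY') = X \<otimes>\<^bsub>TGG\<^esub> Y" using mult_cls[OF X'(1) Y'(1) r] cX cY by simp
  moreover have "maps (tprod tX' tY') c b" using maps_prod[OF X'(1) Y'(1) r Y'(3) X'(4)] .
  ultimately show ?thesis unfolding Rl_def by blast
qed

lemma maps_child:
  assumes "maps t a b"
  shows "\<exists>k. 1 \<le> k \<and> k \<le> leaves (rt t) \<and>
    (\<forall>i<d. \<exists>i'<d. maps (ex t k) (a @ [i]) (b @ [i'])) \<and> (\<forall>i'<d. \<exists>i<d. maps (ex t k) (a @ [i]) (b @ [i']))"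
proof -
  obtain T g U where t: "t = (T,g,U)" by (cases t)
  obtain k where k: "vt t" "1 \<le> k" "k \<le> leaves U" "addrs U ! (k-1) = a"
    "addrs T ! (\<rho> (leaves T) g k - 1) = b" using assms t unfolding maps_def by auto
  let ?n = "leaves T" and ?s = "\<rho> (leaves T) g"
  have v: "dvalid d T" "dvalid d U" "leaves T = leaves U" "g \<in> carrier (G ?n)" "1 \<le> ?n"
    using vt_n[OF k(1)] t by auto
  have kn: "1 \<le> k" "k \<le> ?n" using k v by auto
  have sk: "1 \<le> ?s k \<and> ?s k \<le> ?n" using rho_range[OF v(5) v(4)] kn by auto
  have ve: "vt (ex t k)" and le: "leaves (lt (ex t k)) = ?n + d - 1" using ex_valid[OF k(1)] kn t v by auto
  have rt': "rt (ex t k) = grow d k U" and lt': "lt (ex t k) = grow d (?s k) T" and mid': "mid (ex t k) = \<kappa> ?n k g"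
    using t by (simp_all add: ex_simp)
  have lr: "leaves (grow d k U) = ?n + d - 1" using grow_leaves[OF v(2)] kn v by simp
  have M: "maps (ex t k) (a @ [i]) (b @ [i'])" if ii: "i < d" "i' < d" "\<rho> (?n + d - 1) (\<kappa> ?n k g) (k + i) = ?s k + i'" for i i'
  proof -
    have a1: "addrs (grow d k U) ! (k + i - 1) = a @ [i]"
      using addr_grow_block[OF v(2), of k i] kn v ii k(4) by simp
    have a2: "addrs (grow d (?s k) T) ! (?s k + i' - 1) = b @ [i']"
      using addr_grow_block[OF v(1), of "?s k" i'] sk ii k(5) by simp
    have r: "1 \<le> k + i \<and> k + i \<le> ?n + d - 1" using kn ii by simp
    show ?thesis unfolding maps_def using ve rt' lt' mid' le lr r a1 a2 ii(3)
      by (intro conjI exI[of _ "k+i"]) simp_all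
  qed
  have "\<forall>i<d. \<exists>i'<d. maps (ex t k) (a @ [i]) (b @ [i'])"
    using rho_kap_block[OF v(5) kn v(4)] M by metis
  moreover have "\<forall>i'<d. \<exists>i<d. maps (ex t k) (a @ [i]) (b @ [i'])"
    using rho_kap_block_surj[OF v(5) kn v(4)] M by metis
  moreover have "k \<le> leaves (rt t)" using k t by simp
  ultimately show ?thesis using kn by blast
qed

lemma maps_one:
  assumes "dvalid d P" "dvalid d Q" "leaves P = leaves Q" "1 \<le> j" "j \<le> leaves Q"
  shows "maps (P, \<one>\<^bsub>G (leaves P)\<^esub>, Q) (addrs Q ! (j-1)) (addrs P ! (j-1))"
proof -
  have n: "1 \<le> leaves P" using assms by simp
  interpret group "G (leaves P)" using grp n by simp
  have "\<one>\<^bsub>G (leaves P)\<^esub> \<in> carrier (G (leaves P))" by (rule one_closed)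
  then have "vt (P, \<one>\<^bsub>G (leaves P)\<^esub>, Q)" unfolding vt_def2 using assms(1-3) by blast
  then show ?thesis unfolding maps_def using rho_one[OF n] assms by (intro conjI exI[of _ j]) simp_all
qed

end


context csys begin

lemma maps_exists: "vt t \<Longrightarrow> w \<in> set (addrs (rt t)) \<Longrightarrow> \<exists>b. maps t w b"
proof -
  assume v: "vt t" and w: "w \<in> set (addrs (rt t))"
  then obtain i where i: "i < length (addrs (rt t))" "addrs (rt t) ! i = w" by (auto simp: in_set_conv_nth)
  have "1 \<le> Suc i" "Suc i \<le> leaves (rt t)" using i by (simp_all add: len_addrs)
  then have "maps t w (addrs (lt t) ! (\<rho> (leaves (lt t)) (mid t) (Suc i) - 1))"
    unfolding maps_def using v i by (intro conjI exI[of _ "Suc i"]) simp_all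
  then show ?thesis by blast
qed

lemma diff_pair: "vt t \<Longrightarrow> lt t \<noteq> rt t \<Longrightarrow> \<exists>a b. maps t a b \<and> a \<noteq> b"
proof (rule ccontr)
  assume v: "vt t" and ne: "lt t \<noteq> rt t" and nc: "\<not> (\<exists>a b. maps t a b \<and> a \<noteq> b)"
  have sub: "set (addrs (rt t)) \<subseteq> set (addrs (lt t))"
  proof
    fix w assume w: "w \<in> set (addrs (rt t))"
    then obtain b where m: "maps t w b" using maps_exists v by blast
    then have "w = b" using nc by blast
    then show "w \<in> set (addrs (lt t))" using maps_mem m by blast
  qed
  have "card (set (addrs (rt t))) = card (set (addrs (lt t)))"
    using distinct_card[OF distinct_addrs] len_addrs vt_n[OF v] by metis
  then have "set (addrs (rt t)) = set (addrs (lt t))" using card_subset_eq[OF _ sub] by simp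
  then have "rt t = lt t" using addrs_set_inj vt_n[OF v] by blast
  then show False using ne by simp
qed

lemma prefix_pair:
  assumes m: "maps t a b" and ab: "a = b @ (x # c)"
  shows "\<exists>a' b'. maps t a' b' \<and> incomp a' b'"
proof -
  have v: "vt t" using m unfolding maps_def by blast
  have vv: "dvalid d (rt t)" "dvalid d (lt t)" using vt_n v by auto
  have mem: "a \<in> set (addrs (rt t))" "b \<in> set (addrs (lt t))" using maps_mem m by auto
  define y where "y = (if x = 0 then 1 else (0::nat))"
  have y: "y < d" "y \<noteq> x" using d2 unfolding y_def by auto
  have dz: "\<forall>z\<in>set (b @ [y]). z < d" using addrs_digits[OF vv(2) mem(2)] y by auto
  obtain w where w: "w \<in> set (addrs (rt t))" "(\<exists>e. b @ [y] = w @ e) \<or> (\<exists>e. w = (b @ [y]) @ e)"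
    using comparable_leaf[OF d1 vv(1) dz] by blast
  have "\<exists>e. w = b @ (y # e)"
  proof (cases "\<exists>e. w = (b @ [y]) @ e")
    case True then show ?thesis by auto
  next
    case False
    then obtain e where e: "b @ [y] = w @ e" using w by blast
    show ?thesis
    proof (cases "e = []")
      case True then show ?thesis using e by auto
    next
      case False
      then obtain e0 z where "e = e0 @ [z]" by (cases e rule: rev_exhaust) auto
      then have "b @ [y] = (w @ e0) @ [z]" using e by simp
      then have "b = w @ e0" by simp
      then have "a = w @ (e0 @ x # c)" using ab by simp
      then have "e0 @ x # c = []" using addrs_antichain[OF w(1)] mem(1) by blast
      then show ?thesis by simp
    qed
  qed
  then obtain e where we: "w = b @ (y # e)" by blast
  have wa: "w \<noteq> a" using we ab y by auto
  obtain b' where m': "maps t w b'" using maps_exists v w(1) by blast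
  have bb: "b' \<noteq> b" using maps_det2[OF m'] m wa by auto
  have mem': "b' \<in> set (addrs (lt t))" using maps_mem m' by blast
  have ib: "incomp b b'" using leaves_incomp[OF mem(2) mem'] bb by simp
  have "incomp w b'"
    unfolding incomp_def
  proof (intro conjI notI)
    assume "\<exists>f. w = b' @ f"
    then obtain f where "w = b' @ f" by blast
    then have "b @ (y # e) = b' @ f" using we by simp
    then have "(\<exists>g. b' = b @ g) \<or> (\<exists>g. b = b' @ g)" using prefix_cases[of b "y # e" b' f] by blast
    then show False using ib unfolding incomp_def by blast
  next
    assume "\<exists>f. b' = w @ f"
    then obtain f where "b' = b @ (y # e @ f)" using we by auto
    then show False using ib unfolding incomp_def by blast
  qed
  then show ?thesis using m' by blast
qed

lemma incomp_pair:
  assumes m: "maps t a b" and ab: "a \<noteq> b"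
  shows "\<exists>a' b'. maps t a' b' \<and> incomp a' b'"
proof (cases "incomp a b")
  case True then show ?thesis using m by blast
next
  case False
  then consider c where "a = b @ c" | c where "b = a @ c" unfolding incomp_def by blast
  then show ?thesis
  proof cases
    case 1
    then obtain x c' where "a = b @ (x # c')" using ab by (cases c) auto
    then show ?thesis using prefix_pair m by blast
  next
    case 2
    then obtain x c' where bc: "b = a @ (x # c')" using ab by (cases c) auto
    have v: "vt t" using m unfolding maps_def by blast
    have "maps (tinv t) b a" using maps_tinv m by blast
    then obtain a' b' where "maps (tinv t) a' b'" "incomp a' b'" using prefix_pair bc by blast
    then have "maps (tinv (tinv t)) b' a'" "incomp b' a'" using maps_tinv incomp_sym by auto
    then show ?thesis using tinv_tinv v by auto
  qed
qed

lemma ex_cls: "vt t \<Longrightarrow> 1 \<le> k \<Longrightarrow> k \<le> leaves (rt t) \<Longrightarrow> cls (ex t k) = cls t"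
  using ex_in_rel R_sub_E cls_eq_iff E_sym by metis

lemma good_pair:
  assumes m: "maps t a b" and ab: "incomp a b"
  shows "\<exists>t2 a2 b2. maps t2 a2 b2 \<and> cls t2 = cls t \<and> incomp a2 b2 \<and> 0 \<in> set a2 \<and> 0 \<in> set b2"
proof -
  have v: "vt t" using m unfolding maps_def by blast
  obtain k where k: "1 \<le> k" "k \<le> leaves (rt t)" "\<forall>i<d. \<exists>i'<d. maps (ex t k) (a @ [i]) (b @ [i'])"
    using maps_child[OF m] by blast
  obtain i' where i': "maps (ex t k) (a @ [0]) (b @ [i'])" using k(3) d2 by fastforce
  let ?t1 = "ex t k"
  have c1: "cls ?t1 = cls t" using ex_cls v k by blast
  have v1: "vt ?t1" using i' unfolding maps_def by blast
  obtain k' where k': "1 \<le> k'" "k' \<le> leaves (rt ?t1)" "\<forall>j'<d. \<exists>j<d. maps (ex ?t1 k') ((a @ [0]) @ [j]) ((b @ [i']) @ [j'])"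
    using maps_child[OF i'] by blast
  obtain j where j: "maps (ex ?t1 k') ((a @ [0]) @ [j]) ((b @ [i']) @ [0])" using k'(3) d2 by fastforce
  have c2: "cls (ex ?t1 k') = cls t" using ex_cls v1 k' c1 by simp
  have "incomp (a @ ([0] @ [j])) (b @ ([i'] @ [0]))" using incomp_ext ab by blast
  then have "incomp ((a @ [0]) @ [j]) ((b @ [i']) @ [0])" by simp
  moreover have "0 \<in> set ((a @ [0]) @ [j])" "0 \<in> set ((b @ [i']) @ [0])" by simp_all
  ultimately show ?thesis using j c2 by blast
qed

end


lemma finite_upper:
  assumes "finite S" "\<forall>Y\<in>S. dvalid d (D Y)"
  shows "\<exists>Z. dvalid d Z \<and> (\<forall>Y\<in>S. le (D Y) Z)"
  using assms
proof (induction S rule: finite_induct)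
  case empty then show ?case by (intro exI[of _ Leaf]) simp
next
  case (insert y S)
  then obtain Z where Z: "dvalid d Z" "\<forall>Y\<in>S. le (D Y) Z" by auto
  have vy: "dvalid d (D y)" using insert by simp
  have "dvalid d (join Z (D y))" "le Z (join Z (D y))" "le (D y) (join Z (D y))"
    using join_valid[OF Z(1) vy] join_le1[OF Z(1) vy] join_le2[OF Z(1) vy] by auto
  then show ?case using Z le_trans by blast
qed

context csys begin

lemma Fd_sub: "Fd_copy d G \<rho> \<kappa> \<subseteq> carrier TGG"
proof
  fix f assume "f \<in> Fd_copy d G \<rho> \<kappa>"
  then obtain T U where f: "f = cls (T, \<one>\<^bsub>G (leaves T)\<^esub>, U)" "dvalid d T" "dvalid d U" "leaves T = leaves U"
    unfolding Fd_copy_def by blast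
  have n: "1 \<le> leaves T" using leaves_pos[OF d1 f(2)] .
  interpret group "G (leaves T)" using grp n by simp
  have "\<one>\<^bsub>G (leaves T)\<^esub> \<in> carrier (G (leaves T))" by (rule one_closed)
  then have "vt (T, \<one>\<^bsub>G (leaves T)\<^esub>, U)" unfolding vt_def2 using f by blast
  then show "f \<in> carrier TGG" using f cls_carrier by simp
qed

lemma Fd_mem: "dvalid d A \<Longrightarrow> dvalid d B \<Longrightarrow> leaves A = leaves B \<Longrightarrow> cls (A, \<one>\<^bsub>G (leaves A)\<^esub>, B) \<in> Fd_copy d G \<rho> \<kappa>"
  unfolding Fd_copy_def by blast

lemma vt_one: "dvalid d A \<Longrightarrow> dvalid d B \<Longrightarrow> leaves A = leaves B \<Longrightarrow> vt (A, \<one>\<^bsub>G (leaves A)\<^esub>, B)"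
proof -
  assume a: "dvalid d A" "dvalid d B" "leaves A = leaves B"
  have n: "1 \<le> leaves A" using leaves_pos[OF d1 a(1)] .
  interpret group "G (leaves A)" using grp n by simp
  have "\<one>\<^bsub>G (leaves A)\<^esub> \<in> carrier (G (leaves A))" by (rule one_closed)
  then show ?thesis unfolding vt_def2 using a by blast
qed

lemma inv_Fd: "dvalid d A \<Longrightarrow> dvalid d B \<Longrightarrow> leaves A = leaves B \<Longrightarrow>
  inv\<^bsub>TGG\<^esub> (cls (A, \<one>\<^bsub>G (leaves A)\<^esub>, B)) = cls (B, \<one>\<^bsub>G (leaves A)\<^esub>, A)"
proof -
  assume a: "dvalid d A" "dvalid d B" "leaves A = leaves B"
  have n: "1 \<le> leaves A" using leaves_pos[OF d1 a(1)] .
  interpret group "G (leaves A)" using grp n by simp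
  have "tinv (A, \<one>\<^bsub>G (leaves A)\<^esub>, B) = (B, \<one>\<^bsub>G (leaves A)\<^esub>, A)" by (simp add: tinv_simp)
  then show ?thesis using inv_cls[OF vt_one[OF a]] by simp
qed

lemma conj_cls:
  assumes "dvalid d A" "dvalid d B" "leaves A = leaves B" "vt t" "lt t = A" "rt t = A"
  shows "inv\<^bsub>TGG\<^esub> (cls (A, \<one>\<^bsub>G (leaves A)\<^esub>, B)) \<otimes>\<^bsub>TGG\<^esub> cls t \<otimes>\<^bsub>TGG\<^esub> cls (A, \<one>\<^bsub>G (leaves A)\<^esub>, B)
    = cls (B, mid t, B)"
proof -
  have n: "1 \<le> leaves A" using leaves_pos[OF d1 assms(1)] .
  interpret group "G (leaves A)" using grp n by simp
  have g: "mid t \<in> carrier (G (leaves A))" using vt_n[OF assms(4)] assms(5) by simp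
  have t: "t = (A, mid t, A)" using assms(5,6) by (cases t) (simp add: lt_def rt_def mid_def)
  have v1: "vt (B, \<one>\<^bsub>G (leaves A)\<^esub>, A)" using vt_one[OF assms(2,1)] assms(3) by simp
  have v2: "vt (A, \<one>\<^bsub>G (leaves A)\<^esub>, B)" using vt_one[OF assms(1,2,3)] .
  have vBA: "vt (B, mid t, A)" unfolding vt_def2 using assms g by simp
  have "inv\<^bsub>TGG\<^esub> (cls (A, \<one>\<^bsub>G (leaves A)\<^esub>, B)) \<otimes>\<^bsub>TGG\<^esub> cls t = cls (B, \<one>\<^bsub>G (leaves A)\<^esub>, A) \<otimes>\<^bsub>TGG\<^esub> cls (A, mid t, A)"
    using inv_Fd[OF assms(1-3)] t by simp
  also have "\<dots> = cls (tprod (B, \<one>\<^bsub>G (leaves A)\<^esub>, A) (A, mid t, A))"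
    using mult_cls[OF v1] assms(4) t by (metis ltmr(1) ltmr(3))
  also have "tprod (B, \<one>\<^bsub>G (leaves A)\<^esub>, A) (A, mid t, A) = (B, mid t, A)"
    using g assms(3)[symmetric] by (simp add: tprod_simp)
  finally have e1: "inv\<^bsub>TGG\<^esub> (cls (A, \<one>\<^bsub>G (leaves A)\<^esub>, B)) \<otimes>\<^bsub>TGG\<^esub> cls t = cls (B, mid t, A)" .
  have "cls (B, mid t, A) \<otimes>\<^bsub>TGG\<^esub> cls (A, \<one>\<^bsub>G (leaves A)\<^esub>, B) = cls (tprod (B, mid t, A) (A, \<one>\<^bsub>G (leaves A)\<^esub>, B))"
    using mult_cls[OF vBA v2] by simp
  also have "tprod (B, mid t, A) (A, \<one>\<^bsub>G (leaves A)\<^esub>, B) = (B, mid t, B)"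
    using g assms(3)[symmetric] by (simp add: tprod_simp)
  finally show ?thesis using e1 by simp
qed

lemma conj_carrier: "x \<in> carrier TGG \<Longrightarrow> f \<in> Fd_copy d G \<rho> \<kappa> \<Longrightarrow> inv\<^bsub>TGG\<^esub> f \<otimes>\<^bsub>TGG\<^esub> x \<otimes>\<^bsub>TGG\<^esub> f \<in> carrier TGG"
proof -
  assume x: "x \<in> carrier TGG" and f: "f \<in> Fd_copy d G \<rho> \<kappa>"
  interpret group TGG by (rule TG_group)
  have "f \<in> carrier TGG" using f Fd_sub by blast
  then show ?thesis using x by simp
qed

lemma caseA:
  assumes t0: "vt t0" "x = cls t0" and nx: "x \<noteq> \<one>\<^bsub>TGG\<^esub>"
    and A': "\<forall>t. vt t \<and> cls t = x \<longrightarrow> lt t = rt t" and div: "diverse d G \<kappa>"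
  shows "infinite {inv\<^bsub>TGG\<^esub> f \<otimes>\<^bsub>TGG\<^esub> x \<otimes>\<^bsub>TGG\<^esub> f | f. f \<in> Fd_copy d G \<rho> \<kappa>}"
proof
  let ?S = "{inv\<^bsub>TGG\<^esub> f \<otimes>\<^bsub>TGG\<^esub> x \<otimes>\<^bsub>TGG\<^esub> f | f. f \<in> Fd_copy d G \<rho> \<kappa>}"
  assume fin: "finite ?S"
  have xc: "x \<in> carrier TGG" using t0 cls_carrier by simp
  have SC: "\<exists>r. vt r \<and> cls r = Y" if Y: "Y \<in> ?S" for Y
  proof -
    obtain f where f: "f \<in> Fd_copy d G \<rho> \<kappa>" "Y = inv\<^bsub>TGG\<^esub> f \<otimes>\<^bsub>TGG\<^esub> x \<otimes>\<^bsub>TGG\<^esub> f" using Y by blast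
    then have "Y \<in> carrier TGG" using conj_carrier xc by simp
    then show ?thesis using TG_carrier by auto
  qed
  define rep where "rep Y = (SOME r. vt r \<and> cls r = Y)" for Y
  have rep: "vt (rep Y) \<and> cls (rep Y) = Y" if "Y \<in> ?S" for Y
    unfolding rep_def using someI_ex[OF SC[OF that]] .
  have "\<forall>Y\<in>?S. dvalid d (rt (rep Y))" using rep vt_n by blast
  then obtain Z0 where Z0: "dvalid d Z0" "\<forall>Y\<in>?S. le (rt (rep Y)) Z0"
    using finite_upper[OF fin, of d "\<lambda>Y. rt (rep Y)"] by blast
  obtain n0 where n0: "\<forall>n\<ge>max n0 1. (\<Inter>k\<in>{1..n}. \<kappa> n k ` carrier (G n)) = {\<one>\<^bsub>G (n + d - 1)\<^esub>}"
    using div unfolding diverse_def by blast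
  have vr0: "dvalid d (rt t0)" using vt_n t0 by blast
  let ?J = "join (rt t0) Z0"
  have vJ: "dvalid d ?J" "le (rt t0) ?J" "le Z0 ?J"
    using join_valid[OF vr0 Z0(1)] join_le1[OF vr0 Z0(1)] join_le2[OF vr0 Z0(1)] by auto
  have lJ: "1 \<le> leaves ?J" using leaves_pos[OF d1 vJ(1)] .
  let ?m = "n0 + 2"
  define A where "A = giter d 1 ?m ?J"
  define Z where "Z = giter d 1 (n0 + 1) ?J"
  have PA: "dvalid d A" "leaves A = leaves ?J + ?m * (d - 1)" "le ?J A"
    using giter_props[OF vJ(1) _ lJ d1, of ?m] unfolding A_def by auto
  have PZ: "dvalid d Z" "leaves Z = leaves ?J + (n0 + 1) * (d - 1)" "le ?J Z"
    using giter_props[OF vJ(1) _ lJ d1, of "n0 + 1"] unfolding Z_def by auto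
  define n where "n = leaves Z"
  have lA: "leaves A = n + d - 1"
  proof -
    have "\<And>e::nat. (n0 + 2) * e = (n0 + 1) * e + e" by simp
    then have "?m * (d - 1) = (n0 + 1) * (d - 1) + (d - 1)" by blast
    then have "leaves A = leaves Z + (d - 1)" using PA PZ by simp
    then show ?thesis unfolding n_def using d1 by simp
  qed
  have nge: "n \<ge> max n0 1"
  proof -
    have a0: "(n0 + 1) * (d - 1) \<ge> (n0 + 1) * 1" using d2 by (intro mult_le_mono2) simp
    then have a: "(n0 + 1) * (d - 1) \<ge> n0 + 1" by simp
    have b: "n = leaves ?J + (n0 + 1) * (d - 1)" unfolding n_def using PZ(2) .
    have "n \<ge> n0 + 2" using a b lJ by linarith
    then show ?thesis by simp
  qed
  have leA: "le (rt t0) A" using le_trans[OF vJ(2) PA(3)] .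
  define tA where "tA = Exp t0 A"
  have tA: "vt tA" "rt tA = A" "(t0, tA) \<in> E"
    using Exp_props[OF t0(1) PA(1) leA] Exp_E[OF t0(1) PA(1) leA] unfolding tA_def by auto
  have ctA: "cls tA = x" using tA(3) t0(2) cls_eq_iff E_sym by metis
  have ltA: "lt tA = A" using A' tA ctA by metis
  define gA where "gA = mid tA"
  have gAc: "gA \<in> carrier (G (leaves A))" using vt_n[OF tA(1)] ltA unfolding gA_def by simp
  have tAe: "tA = (A, gA, A)" using ltA tA(2) unfolding gA_def by (cases tA) (simp add: lt_def rt_def mid_def)
  have gA1: "gA \<noteq> \<one>\<^bsub>G (leaves A)\<^esub>"
  proof
    assume "gA = \<one>\<^bsub>G (leaves A)\<^esub>"
    then have "x = cls (A, \<one>\<^bsub>G (leaves A)\<^esub>, A)" using ctA tAe by simp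
    then have "x = \<one>\<^bsub>TGG\<^esub>" using one_cls[OF PA(1)] by simp
    then show False using nx by simp
  qed
  have I: "(\<Inter>k\<in>{1..n}. \<kappa> n k ` carrier (G n)) = {\<one>\<^bsub>G (n + d - 1)\<^esub>}" using n0 nge by blast
  obtain k where k: "k \<in> {1..n}" "gA \<notin> \<kappa> n k ` carrier (G n)"
  proof (rule ccontr)
    assume "\<not> thesis"
    then have "\<forall>k\<in>{1..n}. gA \<in> \<kappa> n k ` carrier (G n)" using that by blast
    then have "gA \<in> (\<Inter>k\<in>{1..n}. \<kappa> n k ` carrier (G n))" by blast
    then have "gA = \<one>\<^bsub>G (n + d - 1)\<^esub>" using I by blast
    then show False using gA1 lA by simp
  qed
  have kr: "1 \<le> k" "k \<le> leaves Z" using k unfolding n_def by auto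
  define B where "B = grow d k Z"
  have vB: "dvalid d B" "leaves B = leaves A"
    using grow_valid[OF PZ(1) kr] grow_leaves[OF PZ(1) kr] lA unfolding B_def n_def by auto
  have fF: "cls (A, \<one>\<^bsub>G (leaves A)\<^esub>, B) \<in> Fd_copy d G \<rho> \<kappa>" using Fd_mem[OF PA(1) vB(1)] vB(2) by simp
  have "inv\<^bsub>TGG\<^esub> (cls (A, \<one>\<^bsub>G (leaves A)\<^esub>, B)) \<otimes>\<^bsub>TGG\<^esub> cls tA \<otimes>\<^bsub>TGG\<^esub> cls (A, \<one>\<^bsub>G (leaves A)\<^esub>, B)
    = cls (B, mid tA, B)" using conj_cls[OF PA(1) vB(1) vB(2)[symmetric] tA(1) ltA tA(2)] .
  then have YS: "cls (B, gA, B) \<in> ?S" using fF ctA unfolding gA_def by blast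
  let ?Y = "cls (B, gA, B)"
  have r: "vt (rep ?Y)" "cls (rep ?Y) = ?Y" "le (rt (rep ?Y)) Z0" using rep[OF YS] Z0(2) YS by auto
  have leZ: "le (rt (rep ?Y)) Z" using le_trans[OF r(3) le_trans[OF vJ(3) PZ(3)]] .
  define s where "s = Exp (rep ?Y) Z"
  have sp: "vt s" "rt s = Z" "(rep ?Y, s) \<in> E"
    using Exp_props[OF r(1) PZ(1) leZ] Exp_E[OF r(1) PZ(1) leZ] unfolding s_def by auto
  have ln: "leaves (lt s) = n" using vt_n[OF sp(1)] sp(2) unfolding n_def by simp
  have ms: "mid s \<in> carrier (G n)" using vt_n[OF sp(1)] ln by simp
  have kr2: "1 \<le> k" "k \<le> leaves (rt s)" using kr sp(2) by auto
  have vs': "vt (ex s k)" using ex_valid[OF sp(1) kr2] by blast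
  have cs': "cls (ex s k) = ?Y" using ex_cls[OF sp(1) kr2] sp(3) r(2) cls_eq_iff E_sym by metis
  have rs': "rt (ex s k) = B" and ms': "mid (ex s k) = \<kappa> n k (mid s)"
    using sp(2) ln unfolding B_def by (simp_all add: ex_def)
  have vY: "vt (B, gA, B)" unfolding vt_def2 using vB gAc by simp
  have "(ex s k, (B, gA, B)) \<in> E" using cs' cls_eq_iff by blast
  then have "ex s k = (B, gA, B)" using uniq_rt[OF vs' vY] rs' by simp
  then have "gA = \<kappa> n k (mid s)" using ms' by simp
  then show False using k(2) ms by blast
qed

lemma caseB:
  assumes t: "vt t" "cls t = x" "lt t \<noteq> rt t"
  shows "infinite {inv\<^bsub>TGG\<^esub> f \<otimes>\<^bsub>TGG\<^esub> x \<otimes>\<^bsub>TGG\<^esub> f | f. f \<in> Fd_copy d G \<rho> \<kappa>}"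
proof -
  let ?S = "{inv\<^bsub>TGG\<^esub> f \<otimes>\<^bsub>TGG\<^esub> x \<otimes>\<^bsub>TGG\<^esub> f | f. f \<in> Fd_copy d G \<rho> \<kappa>}"
  interpret TGgrp: group TGG by (rule TG_group)
  obtain a b where ab: "maps t a b" "a \<noteq> b" using diff_pair t by blast
  obtain a1 b1 where ab1: "maps t a1 b1" "incomp a1 b1" using incomp_pair ab by blast
  obtain t2 a2 b2 where m2: "maps t2 a2 b2" "cls t2 = cls t" "incomp a2 b2" "0 \<in> set a2" "0 \<in> set b2"
    using good_pair ab1 by blast
  have v2: "vt t2" using m2 unfolding maps_def by blast
  have xc: "x \<in> carrier TGG" using t cls_carrier by blast
  have "maps t2 a2 b2 \<and> cls t2 = x" using m2 t by simp
  then have Rx: "(a2, b2) \<in> Rl x" unfolding Rl_def by blast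
  have mem: "a2 \<in> set (addrs (rt t2))" "b2 \<in> set (addrs (lt t2))" using maps_mem m2 by auto
  have dg: "\<forall>z\<in>set a2. z < d" "\<forall>z\<in>set b2. z < d"
    using addrs_digits mem vt_n[OF v2] by blast+
  obtain P where P: "dvalid d P" "a2 \<in> set (addrs P)" "b2 \<in> set (addrs P)"
    using two_tree[OF d1 dg m2(3)] by blast
  define n where "n = leaves P"
  have lP: "length (addrs P) = n" unfolding n_def by (simp add: len_addrs)
  obtain p where p: "1 \<le> p" "p \<le> n" "addrs P ! (p-1) = a2"
  proof -
    obtain i where "i < length (addrs P)" "addrs P ! i = a2" using P(2) by (auto simp: in_set_conv_nth)
    then show ?thesis using that[of "Suc i"] lP by simp
  qed
  obtain q where q: "1 \<le> q" "q \<le> n" "addrs P ! (q-1) = b2"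
  proof -
    obtain i where "i < length (addrs P)" "addrs P ! i = b2" using P(3) by (auto simp: in_set_conv_nth)
    then show ?thesis using that[of "Suc i"] lP by simp
  qed
  have a2b2: "a2 \<noteq> b2" using m2(3) unfolding incomp_def by auto
  have pq: "p \<noteq> q" using p q a2b2 by auto
  have LL: "addrs P ! (n - 1) = last (addrs P)" using lP addrs_ne[OF d1 P(1)] by (simp add: last_conv_nth)
  have ll: "\<forall>z\<in>set (last (addrs P)). z = d - 1" using last_leaf[OF d1 P(1)] by blast
  have pn: "p < n"
  proof (rule ccontr)
    assume "\<not> p < n"
    then have "p = n" using p by simp
    then have "a2 = last (addrs P)" using p LL by simp
    then have "0 = d - 1" using ll m2(4) by blast
    then show False using d2 by simp
  qed
  have qn: "q < n"
  proof (rule ccontr)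
    assume "\<not> q < n"
    then have "q = n" using q by simp
    then have "b2 = last (addrs P)" using q LL by simp
    then have "0 = d - 1" using ll m2(5) by blast
    then show False using d2 by simp
  qed
  define mx where "mx = max p q"
  have mxr: "1 \<le> mx" "mx \<le> n" using p q unfolding mx_def by auto
  have n1: "1 \<le> n" "n \<le> leaves P" using p pn unfolding n_def by auto
  define Pi where "Pi i = giter d n i P" for i
  define Qi where "Qi i = giter d mx i P" for i
  have PiP: "dvalid d (Pi i) \<and> leaves (Pi i) = n + i * (d - 1) \<and>
      (\<forall>j. 1 \<le> j \<and> j < n \<longrightarrow> addrs (Pi i) ! (j-1) = addrs P ! (j-1))" for i
    using giter_props[OF P(1) n1 d1, of i] unfolding Pi_def n_def by auto
  have QiP: "dvalid d (Qi i) \<and> leaves (Qi i) = n + i * (d - 1) \<and>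
      (\<forall>j. 1 \<le> j \<and> j < mx \<longrightarrow> addrs (Qi i) ! (j-1) = addrs P ! (j-1)) \<and>
      addrs (Qi i) ! (mx-1) = addrs P ! (mx-1) @ replicate i 0" for i
    using giter_props[OF P(1) mxr(1) _ d1, of i] mxr unfolding Qi_def n_def by auto
  define f where "f i = cls (Pi i, \<one>\<^bsub>G (leaves (Pi i))\<^esub>, Qi i)" for i
  define Y where "Y i = inv\<^bsub>TGG\<^esub> (f i) \<otimes>\<^bsub>TGG\<^esub> x \<otimes>\<^bsub>TGG\<^esub> f i" for i
  have lPQ: "leaves (Pi i) = leaves (Qi i)" for i using PiP QiP by simp
  have fF: "f i \<in> Fd_copy d G \<rho> \<kappa>" for i unfolding f_def using Fd_mem PiP QiP lPQ by blast
  have YS: "Y i \<in> ?S" for i unfolding Y_def using fF by blast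
  have key: "(addrs (Qi i) ! (p-1), addrs (Qi i) ! (q-1)) \<in> Rl (Y i)" for i
  proof -
    have vP: "dvalid d (Pi i)" and vQ: "dvalid d (Qi i)" using PiP QiP by auto
    have pr: "p \<le> leaves (Qi i)" "q \<le> leaves (Qi i)" using QiP p q by auto
    have aP: "addrs (Pi i) ! (p-1) = a2" "addrs (Pi i) ! (q-1) = b2" using PiP p q pn qn by auto
    have "maps (Pi i, \<one>\<^bsub>G (leaves (Pi i))\<^esub>, Qi i) (addrs (Qi i) ! (p-1)) (addrs (Pi i) ! (p-1))"
      using maps_one[OF vP vQ lPQ p(1) pr(1)] .
    then have R1: "(addrs (Qi i) ! (p-1), a2) \<in> Rl (f i)" unfolding Rl_def f_def using aP by auto
    have R2: "(addrs (Qi i) ! (p-1), b2) \<in> Rl (x \<otimes>\<^bsub>TGG\<^esub> f i)" using Rl_comp[OF R1 Rx] .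
    have "maps (Qi i, \<one>\<^bsub>G (leaves (Qi i))\<^esub>, Pi i) (addrs (Pi i) ! (q-1)) (addrs (Qi i) ! (q-1))"
      using maps_one[OF vQ vP lPQ[symmetric] q(1)] pr(2) lPQ by simp
    moreover have "inv\<^bsub>TGG\<^esub> (f i) = cls (Qi i, \<one>\<^bsub>G (leaves (Qi i))\<^esub>, Pi i)"
      unfolding f_def using inv_Fd[OF vP vQ lPQ] lPQ by simp
    ultimately have R3: "(b2, addrs (Qi i) ! (q-1)) \<in> Rl (inv\<^bsub>TGG\<^esub> (f i))" unfolding Rl_def using aP by auto
    have R4: "(addrs (Qi i) ! (p-1), addrs (Qi i) ! (q-1)) \<in> Rl (inv\<^bsub>TGG\<^esub> (f i) \<otimes>\<^bsub>TGG\<^esub> (x \<otimes>\<^bsub>TGG\<^esub> f i))"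
      using Rl_comp[OF R2 R3] .
    have fc: "f i \<in> carrier TGG" using fF Fd_sub by blast
    have "Y i = inv\<^bsub>TGG\<^esub> (f i) \<otimes>\<^bsub>TGG\<^esub> (x \<otimes>\<^bsub>TGG\<^esub> f i)"
      unfolding Y_def using fc xc by (simp add: TGgrp.m_assoc)
    then show ?thesis using R4 by simp
  qed
  have "inj Y"
  proof (rule injI)
    fix i j assume e: "Y i = Y j"
    show "i = j"
    proof (cases "p < q")
      case True
      then have "mx = q" unfolding mx_def by simp
      then have c: "addrs (Qi i) ! (p-1) = a2" "addrs (Qi j) ! (p-1) = a2"
        "addrs (Qi i) ! (q-1) = b2 @ replicate i 0" "addrs (Qi j) ! (q-1) = b2 @ replicate j 0"
        using QiP p q True by auto
      have "(a2, b2 @ replicate i 0) \<in> Rl (Y i)" "(a2, b2 @ replicate j 0) \<in> Rl (Y i)"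
        using key[of i] key[of j] c e by auto
      then have "b2 @ replicate i 0 = b2 @ replicate j 0" using Rl_fun by blast
      then show ?thesis by (metis length_append length_replicate add_left_cancel)
    next
      case False
      then have qp: "q < p" using pq by simp
      then have "mx = p" unfolding mx_def by simp
      then have c: "addrs (Qi i) ! (q-1) = b2" "addrs (Qi j) ! (q-1) = b2"
        "addrs (Qi i) ! (p-1) = a2 @ replicate i 0" "addrs (Qi j) ! (p-1) = a2 @ replicate j 0"
        using QiP p q qp by auto
      have "(a2 @ replicate i 0, b2) \<in> Rl (Y i)" "(a2 @ replicate j 0, b2) \<in> Rl (Y i)"
        using key[of i] key[of j] c e by auto
      then have "a2 @ replicate i 0 = a2 @ replicate j 0" using Rl_inj by blast
      then show ?thesis by (metis length_append length_replicate add_left_cancel)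
    qed
  qed
  then have "infinite (range Y)" using finite_imageD[of Y UNIV] infinite_UNIV_nat by blast
  moreover have "range Y \<subseteq> ?S" using YS by blast
  ultimately show ?thesis using infinite_super by blast
qed

theorem icc:
  assumes "x \<in> carrier TGG" "x \<noteq> \<one>\<^bsub>TGG\<^esub>" "diverse d G \<kappa>"
  shows "infinite {inv\<^bsub>TGG\<^esub> f \<otimes>\<^bsub>TGG\<^esub> x \<otimes>\<^bsub>TGG\<^esub> f | f. f \<in> Fd_copy d G \<rho> \<kappa>}"
proof -
  obtain t0 where t0: "vt t0" "x = cls t0" using assms(1) TG_carrier by auto
  show ?thesis
  proof (cases "\<forall>t. vt t \<and> cls t = x \<longrightarrow> lt t = rt t")
    case True
    then show ?thesis using caseA[OF t0 assms(2) _ assms(3)] by blast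
  next
    case False
    then obtain t where "vt t" "cls t = x" "lt t \<noteq> rt t" by blast
    then show ?thesis using caseB by blast
  qed
qed

end

theorem mainTheorem1:
  fixes d :: nat
    and G :: "nat \<Rightarrow> 'g monoid"
    and \<rho> :: "nat \<Rightarrow> 'g \<Rightarrow> nat \<Rightarrow> nat"
    and \<kappa> :: "nat \<Rightarrow> nat \<Rightarrow> 'g \<Rightarrow> 'g"
  assumes "cloning_system d G \<rho> \<kappa>"
    and "diverse d G \<kappa>"
  shows "\<forall>x\<in>carrier (TG d G \<rho> \<kappa>). x \<noteq> \<one>\<^bsub>TG d G \<rho> \<kappa>\<^esub> \<longrightarrow>
           infinite {inv\<^bsub>TG d G \<rho> \<kappa>\<^esub> f \<otimes>\<^bsub>TG d G \<rho> \<kappa>\<^esub> x \<otimes>\<^bsub>TG d G \<rho> \<kappa>\<^esub> f | f.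
                       f \<in> Fd_copy d G \<rho> \<kappa>}
         \<and> infinite {inv\<^bsub>TG d G \<rho> \<kappa>\<^esub> f \<otimes>\<^bsub>TG d G \<rho> \<kappa>\<^esub> x \<otimes>\<^bsub>TG d G \<rho> \<kappa>\<^esub> f | f.
                       f \<in> carrier (TG d G \<rho> \<kappa>)}"
proof -
  interpret csys d G \<rho> \<kappa> by (rule csys.intro) (rule assms(1))
  show ?thesis
  proof (intro ballI impI conjI)
    fix x assume x: "x \<in> carrier (TG d G \<rho> \<kappa>)" "x \<noteq> \<one>\<^bsub>TG d G \<rho> \<kappa>\<^esub>"
    show inf1: "infinite {inv\<^bsub>TG d G \<rho> \<kappa>\<^esub> f \<otimes>\<^bsub>TG d G \<rho> \<kappa>\<^esub> x \<otimes>\<^bsub>TG d G \<rho> \<kappa>\<^esub> f | f.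
                       f \<in> Fd_copy d G \<rho> \<kappa>}"
      using icc[OF x assms(2)] .
    have "{inv\<^bsub>TG d G \<rho> \<kappa>\<^esub> f \<otimes>\<^bsub>TG d G \<rho> \<kappa>\<^esub> x \<otimes>\<^bsub>TG d G \<rho> \<kappa>\<^esub> f | f.
                       f \<in> Fd_copy d G \<rho> \<kappa>} \<subseteq>
          {inv\<^bsub>TG d G \<rho> \<kappa>\<^esub> f \<otimes>\<^bsub>TG d G \<rho> \<kappa>\<^esub> x \<otimes>\<^bsub>TG d G \<rho> \<kappa>\<^esub> f | f.
                       f \<in> carrier (TG d G \<rho> \<kappa>)}"
      using Fd_sub by blast
    then show "infinite {inv\<^bsub>TG d G \<rho> \<kappa>\<^esub> f \<otimes>\<^bsub>TG d G \<rho> \<kappa>\<^esub> x \<otimes>\<^bsub>TG d G \<rho> \<kappa>\<^esub> f | f.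
                       f \<in> carrier (TG d G \<rho> \<kappa>)}"
      using inf1 infinite_super by blast
  qed
qed


end
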